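(* Suppose $\frac n2-\sqrt n<k<\frac n2$. There exist universal constants $C,c>0$ such that $$\inf_{\hat\theta}\ \sup_{\theta\in\mathbb{R},\ \|\gamma\|_0\le k}P_{\theta,\gamma}\left\{|\hat\theta-\theta|>C\sqrt{\log\Big(1+\frac{n}{(n-2k)^2}\Big)}\right\}\ge c,$$ where the infimum is over all estimators (measurable functions of $X_1,\dots,X_n$).
   Context: Model: for an integer $n\ge 2$, observations $X_j=\theta+\gamma_j+ Z_j$, $j=1,\dots,n$ (unit variance), where $\theta\in\mathbb{R}$, $\gamma\in\mathbb{R}^n$ and $Z_1,\dots,Z_n$ are i.i.d. $N(0,1)$; $P_{\theta,\gamma}$ denotes the joint law of $(X_1,\dots,X_n)$. $\|\gamma\|_0=\#\{j:\gamma_j\neq 0\}$. *)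

theory Defs
  imports "HOL-Probability.Probability"
begin

text \<open>Joint law P_{theta,gamma} of X_j = theta + gamma_j + Z_j, j = 0..n-1, Z_j iid N(0,1).
  Vectors in R^n are functions nat => real restricted to the index set {0..<n}.\<close>
definition obs_model :: "nat \<Rightarrow> real \<Rightarrow> (nat \<Rightarrow> real) \<Rightarrow> (nat \<Rightarrow> real) measure" where
  "obs_model n \<theta> \<gamma> = PiM {0..<n} (\<lambda>j. density lborel (normal_density (\<theta> + \<gamma> j) 1))"

definition l0norm :: "nat \<Rightarrow> (nat \<Rightarrow> real) \<Rightarrow> nat" where
  "l0norm n \<gamma> = card {j \<in> {0..<n}. \<gamma> j \<noteq> 0}"

end

theory Submission
  imports Defs
begin


lemma obs_density:
  fixes n :: nat and mu :: "nat \<Rightarrow> real"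
  shows "PiM {0..<n} (\<lambda>j. density lborel (normal_density (mu j) 1)) =
    density (PiM {0..<n} (\<lambda>_. lborel)) (\<lambda>x. \<Prod>j\<in>{0..<n}. ennreal (normal_density (mu j) 1 (x j)))"
proof -
  have psp: "prob_space (density lborel (normal_density (mu i) 1))" for i
    by (rule prob_space_normal_density) simp
  interpret ps: product_sigma_finite "\<lambda>j. density lborel (normal_density (mu j) 1)"
    unfolding product_sigma_finite_def using prob_space_imp_sigma_finite[OF psp] by blast
  interpret pl: product_sigma_finite "\<lambda>_::nat. lborel::real measure"
    by unfold_locales
  show ?thesis
  proof (rule ps.PiM_eqI[symmetric])
    show "finite {0..<n}" by simp
    show "sets (density (PiM {0..<n} (\<lambda>_. lborel)) (\<lambda>x. \<Prod>j\<in>{0..<n}. ennreal (normal_density (mu j) 1 (x j))))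
       = sets (PiM {0..<n} (\<lambda>j. density lborel (normal_density (mu j) 1)))"
      by (auto intro!: sets_PiM_cong)
    fix A assume A: "\<And>i. i \<in> {0..<n} \<Longrightarrow> A i \<in> sets (density lborel (normal_density (mu i) 1))"
    have Am: "A i \<in> sets borel" if "i \<in> {0..<n}" for i using A[OF that] by simp
    have "emeasure (density (PiM {0..<n} (\<lambda>_. lborel)) (\<lambda>x. \<Prod>j\<in>{0..<n}. ennreal (normal_density (mu j) 1 (x j)))) (PiE {0..<n} A)
       = (\<integral>\<^sup>+x. (\<Prod>j\<in>{0..<n}. ennreal (normal_density (mu j) 1 (x j))) * indicator (PiE {0..<n} A) x \<partial>PiM {0..<n} (\<lambda>_. lborel))"
    proof -
      have meas: "(\<lambda>x. \<Prod>j\<in>{0..<n}. ennreal (normal_density (mu j) 1 (x j))) \<in> borel_measurable (PiM {0..<n} (\<lambda>_. lborel))" by measurable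
      have PA: "PiE {0..<n} A \<in> sets (PiM {0..<n} (\<lambda>_. lborel))" using Am by (intro sets_PiM_I_finite) auto
      show ?thesis by (rule emeasure_density[OF meas PA])
    qed
    also have "\<dots> = (\<integral>\<^sup>+x. (\<Prod>j\<in>{0..<n}. ennreal (normal_density (mu j) 1 (x j)) * indicator (A j) (x j)) \<partial>PiM {0..<n} (\<lambda>_. lborel))"
      apply (rule nn_integral_cong)
      apply (simp add: prod.distrib indicator_def space_PiM PiE_iff)
      done
    also have "\<dots> = (\<Prod>j\<in>{0..<n}. \<integral>\<^sup>+y. ennreal (normal_density (mu j) 1 y) * indicator (A j) y \<partial>lborel)"
      apply (rule pl.product_nn_integral_prod)
      using Am by auto
    also have "\<dots> = (\<Prod>j\<in>{0..<n}. emeasure (density lborel (normal_density (mu j) 1)) (A j))"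
      apply (rule prod.cong, simp)
      apply (subst emeasure_density) using Am by auto
    finally show "emeasure (density (PiM {0..<n} (\<lambda>_. lborel)) (\<lambda>x. \<Prod>j\<in>{0..<n}. ennreal (normal_density (mu j) 1 (x j)))) (PiE {0..<n} A) = (\<Prod>j\<in>{0..<n}. emeasure (density lborel (normal_density (mu j) 1)) (A j))" .
  qed
qed


lemma nd_total: "(\<integral>\<^sup>+x. ennreal (normal_density \<mu> 1 x) \<partial>lborel) = 1"
proof -
  interpret prob_space "density lborel (normal_density \<mu> 1)"
    by (rule prob_space_normal_density) simp
  have "emeasure (density lborel (normal_density \<mu> 1)) UNIV = 1"
    using emeasure_space_1 by simp
  thus ?thesis by (simp add: emeasure_density)
qed

lemma nd_le: "normal_density \<mu> 1 x \<le> 1/2"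
proof -
  have "exp (-(x - \<mu>)\<^sup>2/2) \<le> 1" by simp
  moreover have "sqrt (2*pi) \<ge> 2"
    using pi_gt3 by (simp add: real_le_rsqrt)
  ultimately have "exp (-(x - \<mu>)\<^sup>2/2) * 2 \<le> sqrt (2*pi)" by linarith
  hence "exp (-(x - \<mu>)\<^sup>2/2) / sqrt (2*pi) \<le> 1/2"
    by (simp add: divide_simps)
  thus ?thesis by (simp add: normal_density_def)
qed

lemma nd_mono: assumes "(x - \<mu>)\<^sup>2 \<le> (y - \<nu>)\<^sup>2"
  shows "normal_density \<nu> 1 y \<le> normal_density \<mu> 1 x"
  using assms by (simp add: normal_density_def divide_right_mono)

definition mn :: "real \<Rightarrow> real \<Rightarrow> real" where
  "mn \<delta> x = min (normal_density 0 1 x) (normal_density \<delta> 1 x)"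

lemma mn_meas[measurable]: "mn \<delta> \<in> borel_measurable borel"
  unfolding mn_def by measurable

lemma mn_lower1:
  assumes "\<delta> \<ge> 0"
  shows "ennreal (normal_density 0 1 (\<delta>/2+1)) \<le> (\<integral>\<^sup>+x. ennreal (mn \<delta> x) \<partial>lborel)"
proof -
  have "(\<integral>\<^sup>+x. ennreal (normal_density 0 1 (\<delta>/2+1)) * indicator {\<delta>/2..\<delta>/2+1} x \<partial>lborel)
      \<le> (\<integral>\<^sup>+x. ennreal (mn \<delta> x) \<partial>lborel)"
  proof (rule nn_integral_mono)
    fix x
    show "ennreal (normal_density 0 1 (\<delta>/2+1)) * indicator {\<delta>/2..\<delta>/2+1} x \<le> ennreal (mn \<delta> x)"
    proof (cases "x \<in> {\<delta>/2..\<delta>/2+1}")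
      case True
      have "(x - 0)\<^sup>2 \<le> (\<delta>/2+1 - 0)\<^sup>2" using True assms by (intro power_mono) auto
      hence 1: "normal_density 0 1 (\<delta>/2+1) \<le> normal_density 0 1 x" by (rule nd_mono)
      have "\<bar>x - \<delta>\<bar> \<le> \<bar>\<delta>/2+1 - 0\<bar>" using True assms by auto
      hence "(x - \<delta>)\<^sup>2 \<le> (\<delta>/2+1 - 0)\<^sup>2" by (simp add: abs_le_square_iff)
      hence 2: "normal_density 0 1 (\<delta>/2+1) \<le> normal_density \<delta> 1 x" by (rule nd_mono)
      show ?thesis using True 1 2 by (simp add: mn_def)
    qed simp
  qed
  also have "(\<integral>\<^sup>+x. ennreal (normal_density 0 1 (\<delta>/2+1)) * indicator {\<delta>/2..\<delta>/2+1} x \<partial>lborel)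
     = ennreal (normal_density 0 1 (\<delta>/2+1))"
    by (simp add: nn_integral_cmult_indicator)
  finally show ?thesis by simp
qed

lemma mn_lower2:
  assumes "\<delta> \<ge> 0"
  shows "1 \<le> (\<integral>\<^sup>+x. ennreal (mn \<delta> x) \<partial>lborel) + ennreal (\<delta>/2)"
proof -
  let ?p = "\<lambda>x. ennreal (normal_density 0 1 x)"
  have e1: "(\<integral>\<^sup>+x. ennreal (mn \<delta> x) \<partial>lborel) =
     (\<integral>\<^sup>+x. ?p x * indicator {\<delta>/2..} x + ennreal (normal_density \<delta> 1 x) * indicator {..<\<delta>/2} x \<partial>lborel)"
  proof (rule nn_integral_cong)
    fix x
    show "ennreal (mn \<delta> x) = ?p x * indicator {\<delta>/2..} x + ennreal (normal_density \<delta> 1 x) * indicator {..<\<delta>/2} x"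
    proof (cases "x \<ge> \<delta>/2")
      case True
      hence "(x - \<delta>)\<^sup>2 \<le> (x - 0)\<^sup>2" using assms by (simp add: abs_le_square_iff[symmetric])
      hence "normal_density 0 1 x \<le> normal_density \<delta> 1 x" by (rule nd_mono)
      thus ?thesis using True by (simp add: mn_def indicator_def)
    next
      case False
      hence "(x - 0)\<^sup>2 \<le> (x - \<delta>)\<^sup>2" using assms by (simp add: abs_le_square_iff[symmetric])
      hence "normal_density \<delta> 1 x \<le> normal_density 0 1 x" by (rule nd_mono)
      thus ?thesis using False by (simp add: mn_def indicator_def min_def)
    qed
  qed
  have e2: "(\<integral>\<^sup>+x. ennreal (normal_density \<delta> 1 x) * indicator {..<\<delta>/2} x \<partial>lborel)
     = (\<integral>\<^sup>+x. ?p x * indicator {..<-\<delta>/2} x \<partial>lborel)"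
  proof -
    have "(\<integral>\<^sup>+x. ennreal (normal_density \<delta> 1 x) * indicator {..<\<delta>/2} x \<partial>lborel)
       = (\<integral>\<^sup>+x. ennreal (normal_density \<delta> 1 (\<delta> + x)) * indicator {..<\<delta>/2} (\<delta> + x) \<partial>lborel)"
      using nn_integral_real_affine[of "\<lambda>x. ennreal (normal_density \<delta> 1 x) * indicator {..<\<delta>/2} x" 1 \<delta>] by simp
    also have "\<dots> = (\<integral>\<^sup>+x. ?p x * indicator {..<-\<delta>/2} x \<partial>lborel)"
      by (intro nn_integral_cong) (auto simp: normal_density_def indicator_def)
    finally show ?thesis .
  qed
  have "1 = (\<integral>\<^sup>+x. ?p x \<partial>lborel)" using nd_total by simp
  also have "\<dots> = (\<integral>\<^sup>+x. ?p x * indicator {\<delta>/2..} x + ?p x * indicator {..<-\<delta>/2} x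
        + ?p x * indicator {-\<delta>/2..<\<delta>/2} x \<partial>lborel)"
    using assms by (intro nn_integral_cong) (auto simp: indicator_def)
  also have "\<dots> = (\<integral>\<^sup>+x. ?p x * indicator {\<delta>/2..} x \<partial>lborel) + (\<integral>\<^sup>+x. ?p x * indicator {..<-\<delta>/2} x \<partial>lborel)
        + (\<integral>\<^sup>+x. ?p x * indicator {-\<delta>/2..<\<delta>/2} x \<partial>lborel)"
    by (simp add: nn_integral_add)
  also have "(\<integral>\<^sup>+x. ?p x * indicator {-\<delta>/2..<\<delta>/2} x \<partial>lborel) \<le> (\<integral>\<^sup>+x. ennreal (1/2) * indicator {-\<delta>/2..<\<delta>/2} x \<partial>lborel)"
    using ennreal_leI[OF nd_le[of 0]] by (intro nn_integral_mono) (auto simp: indicator_def)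
  also have "\<dots> = ennreal (\<delta>/2)"
    using assms ennreal_divide_numeral[of \<delta> "num.Bit0 num.One"] by (simp add: nn_integral_cmult_indicator divide_ennreal_def mult.commute)
  also have "(\<integral>\<^sup>+x. ?p x * indicator {\<delta>/2..} x \<partial>lborel) + (\<integral>\<^sup>+x. ?p x * indicator {..<-\<delta>/2} x \<partial>lborel)
      = (\<integral>\<^sup>+x. ennreal (mn \<delta> x) \<partial>lborel)"
    unfolding e1 e2[symmetric] by (simp add: nn_integral_add)
  finally show ?thesis by (simp add: add_left_mono)
qed


definition bp :: "nat \<Rightarrow> real \<Rightarrow> nat \<Rightarrow> real" where
  "bp k p i = real (k choose i) * p ^ i * (1 - p) ^ (k - i)"

lemma bp_sum: "(\<Sum>i\<le>k. bp k p i) = 1"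
  using binomial_ring[of p "1 - p" k] by (simp add: bp_def)

lemma bp_nonneg: "0 \<le> p \<Longrightarrow> p \<le> 1 \<Longrightarrow> 0 \<le> bp k p i"
  by (simp add: bp_def)

lemma bp_pos: "0 < p \<Longrightarrow> p < 1 \<Longrightarrow> i \<le> k \<Longrightarrow> 0 < bp k p i"
  by (simp add: bp_def)

lemma choose_ratio_nat:
  assumes "i < k"
  shows "(k choose Suc i) * Suc i = (k choose i) * (k - i)"
proof -
  obtain k' where k: "k = Suc k'" using assms by (cases k) auto
  have "(k - i) * (k choose i) = k * ((k - 1) choose i)" by (rule binomial_absorb_comp)
  also have "\<dots> = (k choose Suc i) * Suc i" using Suc_times_binomial_eq[of k' i] k by simp
  finally show ?thesis by (simp add: mult.commute)
qed

lemma bp_ratio: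
  assumes "i < k"
  shows "bp k p (Suc i) * (real (Suc i) * (1 - p)) = bp k p i * (real (k - i) * p)"
proof -
  have c: "real (k choose Suc i) * real (Suc i) = real (k choose i) * real (k - i)"
    using choose_ratio_nat[OF assms] by (metis of_nat_mult)
  have e: "(1 - p) ^ (k - i) = (1 - p) ^ (k - Suc i) * (1 - p)"
    using assms by (metis Suc_diff_Suc power_Suc2)
  have "bp k p (Suc i) * (real (Suc i) * (1 - p)) = (real (k choose Suc i) * real (Suc i)) * p ^ i * p * ((1 - p) ^ (k - Suc i) * (1 - p))"
    unfolding bp_def by (simp add: algebra_simps)
  also have "\<dots> = bp k p i * (real (k - i) * p)"
    unfolding c bp_def e by (simp add: algebra_simps)
  finally show ?thesis .
qed

lemma bp_max:
  assumes p0: "0 < p" and p1: "p < 1" and w1: "1 \<le> w"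
    and wa: "4 * (real w)^2 \<le> (real k + 1) * p * (1 - p)"
  shows "bp k p i \<le> 2 / real w"
proof -
  define a where "a = (real k + 1) * p * (1 - p)"
  define f where "f = bp k p"
  have f0: "0 \<le> f i" for i using p0 p1 by (simp add: f_def bp_nonneg)
  have wpos: "real w \<ge> 1" using w1 by simp
  have apos: "a \<ge> 4 * (real w)^2" using wa a_def by simp
  have "4 * real w \<le> 4 * (real w)^2" using wpos by (simp add: power2_eq_square)
  hence "a \<ge> 4 * real w" using apos by linarith
  hence agt: "a > 0" "a \<ge> 4 * real w" using wpos by auto
  define r where "r = 1 - 2 * real w / a"
  have r0: "0 \<le> r" using agt by (simp add: r_def field_simps)
  obtain M where M: "M \<in> {..k}" "\<forall>i\<in>{..k}. f i \<le> f M"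
  proof -
    have "finite (f ` {..k})" "f ` {..k} \<noteq> {}" by auto
    hence "Max (f ` {..k}) \<in> f ` {..k}" by (rule Max_in)
    then obtain M where "M \<in> {..k}" "f M = Max (f ` {..k})" by (metis imageE)
    moreover have "\<forall>i\<in>{..k}. f i \<le> Max (f ` {..k})" by auto
    ultimately show ?thesis using that by auto
  qed
  have hM: "real M \<le> (real k + 1) * p"
  proof (cases M)
    case 0 thus ?thesis using p0 by simp
  next
    case (Suc M')
    have "M' < k" using M Suc by auto
    have rat: "f M * (real M * (1 - p)) = f M' * (real (k - M') * p)"
      using bp_ratio[OF \<open>M' < k\<close>, of p] Suc by (simp add: f_def)
    have "f M' \<le> f M" using M Suc by auto
    have fMp: "f M > 0" using bp_pos[of p M k] p0 p1 M by (simp add: f_def)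
    have "f M * (real M * (1 - p)) \<le> f M * (real (k - M') * p)"
      using rat \<open>f M' \<le> f M\<close> p0 f0[of M'] by (simp add: mult_right_mono)
    hence "real M * (1 - p) \<le> real (k - M') * p" using fMp by simp
    moreover have "real (k - M') = real k + 1 - real M" using \<open>M' < k\<close> Suc by simp
    ultimately show ?thesis by (simp add: algebra_simps)
  qed
  have step: "M + j < k \<and> r * f (M + j) \<le> f (Suc (M + j))" if j: "j < w" "M + j \<le> k" for j
  proof -
    let ?i = "M + j"
    have Q: "(real k + 1) * (1 - p) \<ge> a" using a_def p0 p1 by (simp add: mult_le_cancel_right1 mult.assoc mult_left_le)
    have "real (k - ?i) = real k - real M - real j" using j by simp
    also have "\<dots> \<ge> (real k + 1) * (1 - p) - real w" using hM j by (simp add: algebra_simps)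
    finally have ki: "real (k - ?i) \<ge> (real k + 1) * (1 - p) - real w" .
    have "(real k + 1) * (1 - p) - real w > 0" using Q agt wpos by linarith
    hence "real (k - ?i) > 0" using ki by linarith
    hence lt: "?i < k" by simp
    have ii: "real (Suc ?i) \<le> (real k + 1) * p + real w" using hM j by simp
    have key: "r * (real (Suc ?i) * (1 - p)) \<le> real (k - ?i) * p"
    proof -
      have "r * (real (Suc ?i) * (1 - p)) \<le> r * (((real k + 1) * p + real w) * (1 - p))"
        using ii r0 p1 by (intro mult_left_mono mult_right_mono) auto
      also have "\<dots> = r * (a + real w * (1 - p))" by (simp add: a_def algebra_simps)
      also have "\<dots> = a + real w * (1 - p) - 2 * real w - 2 * (real w)^2 * (1 - p) / a"
        using agt by (simp add: r_def field_simps power2_eq_square)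
      also have "\<dots> \<le> a - real w * p"
      proof -
        have "2 * (real w)^2 * (1 - p) / a \<ge> 0" using agt p1 by simp
        thus ?thesis using wpos by (simp add: algebra_simps)
      qed
      also have "a - real w * p = ((real k + 1) * (1 - p) - real w) * p" by (simp add: a_def algebra_simps)
      also have "\<dots> \<le> real (k - ?i) * p" using ki p0 by (intro mult_right_mono) auto
      finally show ?thesis .
    qed
    have rat: "f (Suc ?i) * (real (Suc ?i) * (1 - p)) = f ?i * (real (k - ?i) * p)"
      using bp_ratio[OF lt, of p] by (simp add: f_def)
    have "f ?i * (r * (real (Suc ?i) * (1 - p))) \<le> f ?i * (real (k - ?i) * p)"
      using mult_left_mono[OF key f0[of ?i]] .
    also have "\<dots> = f (Suc ?i) * (real (Suc ?i) * (1 - p))" using rat by simp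
    finally have "(r * f ?i) * (real (Suc ?i) * (1 - p)) \<le> f (Suc ?i) * (real (Suc ?i) * (1 - p))"
      by (simp add: ac_simps)
    moreover have "real (Suc ?i) * (1 - p) > 0" using p1 by simp
    ultimately have "r * f ?i \<le> f (Suc ?i)" by (rule mult_right_le_imp_le)
    thus ?thesis using lt by simp
  qed
  have chain: "j \<le> w \<Longrightarrow> M + j \<le> k \<and> r ^ j * f M \<le> f (M + j)" for j
  proof (induction j)
    case 0 thus ?case using M by simp
  next
    case (Suc j)
    hence IH: "M + j \<le> k" "r ^ j * f M \<le> f (M + j)" by auto
    have s: "M + j < k" "r * f (M + j) \<le> f (Suc (M + j))" using step[of j] Suc.prems IH by auto
    have "r ^ Suc j * f M = r * (r ^ j * f M)" by simp
    also have "\<dots> \<le> r * f (M + j)" using IH r0 by (simp add: mult_left_mono)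
    also have "\<dots> \<le> f (M + Suc j)" using s by simp
    finally show ?case using s by simp
  qed
  have half: "f M / 2 \<le> f (M + j)" if "j < w" for j
  proof -
    have "1 + real j * (- (2 * real w / a)) \<le> (1 + (- (2 * real w / a))) ^ j"
      using agt by (intro Bernoulli_inequality) (simp add: field_simps)
    hence b: "1 - real j * (2 * real w / a) \<le> r ^ j" by (simp add: r_def)
    have "real j * (2 * real w / a) \<le> real w * (2 * real w / a)"
      using that agt by (intro mult_right_mono) auto
    also have "\<dots> = 2 * (real w)^2 / a" by (simp add: power2_eq_square)
    also have "\<dots> \<le> 1/2" using apos agt by (simp add: field_simps)
    finally have "1/2 \<le> r ^ j" using b by linarith
    hence "1/2 * f M \<le> r ^ j * f M" using f0[of M] by (rule mult_right_mono)
    hence "f M / 2 \<le> r ^ j * f M" by simp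
    thus ?thesis using chain[of j] that by simp
  qed
  have "real w * (f M / 2) = (\<Sum>j<w. f M / 2)" by simp
  also have "\<dots> \<le> (\<Sum>j<w. f (M + j))" using half by (intro sum_mono) auto
  also have "\<dots> = (\<Sum>i\<in>(\<lambda>j. M + j) ` {..<w}. f i)" by (simp add: sum.reindex)
  also have "\<dots> \<le> (\<Sum>i\<le>k. f i)"
  proof (rule sum_mono2)
    show "(\<lambda>j. M + j) ` {..<w} \<subseteq> {..k}"
    proof
      fix i assume "i \<in> (\<lambda>j. M + j) ` {..<w}"
      then obtain j where "j < w" "i = M + j" by auto
      thus "i \<in> {..k}" using chain[of j] by simp
    qed
  qed (auto simp: f0)
  also have "\<dots> = 1" by (simp add: f_def bp_sum)
  finally have "f M \<le> 2 / real w" using wpos by (simp add: field_simps)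
  show ?thesis
  proof (cases "i \<le> k")
    case True
    hence "f i \<le> f M" using M by auto
    thus ?thesis using \<open>f M \<le> 2 / real w\<close> by (simp add: f_def)
  next
    case False thus ?thesis by (simp add: bp_def binomial_eq_0)
  qed
qed

lemma bp_anti:
  assumes p0: "0 \<le> p" and p1: "p \<le> 1" and P: "\<And>i. bp k p i \<le> P"
  shows "(1 - (2 * real r + 1) * P) / 2 \<le>
    (\<Sum>a\<le>k. \<Sum>b\<le>k. bp k p a * bp k p b * (if a + r \<le> b then 1 else 0))"
proof -
  define f where "f = bp k p"
  have f0: "0 \<le> f i" for i using p0 p1 by (simp add: f_def bp_nonneg)
  define S1 where "S1 = (\<Sum>a\<le>k. \<Sum>b\<le>k. f a * f b * (if a + r \<le> b then 1 else 0))"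
  define S2 where "S2 = (\<Sum>a\<le>k. \<Sum>b\<le>k. f a * f b * (if b + r \<le> a then 1 else 0))"
  define S3 where "S3 = (\<Sum>a\<le>k. \<Sum>b\<le>k. f a * f b * (if a < b + r \<and> b < a + r then 1 else 0))"
  have S12: "S2 = S1" unfolding S1_def S2_def
    by (subst sum.swap) (simp add: mult.commute)
  have "1 = (\<Sum>a\<le>k. f a) * (\<Sum>b\<le>k. f b)" by (simp add: f_def bp_sum)
  also have "\<dots> = (\<Sum>a\<le>k. \<Sum>b\<le>k. f a * f b)" by (simp add: sum_product)
  also have "\<dots> \<le> (\<Sum>a\<le>k. \<Sum>b\<le>k. f a * f b * (if a + r \<le> b then 1 else 0)
        + f a * f b * (if b + r \<le> a then 1 else 0) + f a * f b * (if a < b + r \<and> b < a + r then 1 else 0))"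
  proof (intro sum_mono)
    fix a b
    have "0 \<le> f a * f b" using f0 by simp
    thus "f a * f b \<le> f a * f b * (if a + r \<le> b then 1 else 0)
        + f a * f b * (if b + r \<le> a then 1 else 0) + f a * f b * (if a < b + r \<and> b < a + r then 1 else 0)"
      by auto
  qed
  also have "\<dots> = S1 + S2 + S3" unfolding S1_def S2_def S3_def by (simp add: sum.distrib)
  finally have tot: "1 \<le> 2 * S1 + S3" using S12 by simp
  have inner: "(\<Sum>b\<le>k. f b * (if a < b + r \<and> b < a + r then 1 else 0)) \<le> (2 * real r + 1) * P" for a
  proof -
    have "(\<Sum>b\<le>k. f b * (if a < b + r \<and> b < a + r then 1 else 0)) = (\<Sum>b\<in>{b\<in>{..k}. a < b + r \<and> b < a + r}. f b)"
      by (simp add: sum.inter_filter[symmetric] if_distrib cong: if_cong)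
    also have "\<dots> \<le> real (card {b\<in>{..k}. a < b + r \<and> b < a + r}) * P"
      using sum_bounded_above[of "{b\<in>{..k}. a < b + r \<and> b < a + r}" f P] P by (simp add: f_def)
    also have "\<dots> \<le> (2 * real r + 1) * P"
    proof (rule mult_right_mono)
      have "{b\<in>{..k}. a < b + r \<and> b < a + r} \<subseteq> {a - r..a + r}" by auto
      hence "card {b\<in>{..k}. a < b + r \<and> b < a + r} \<le> card {a - r..a + r}" by (intro card_mono) auto
      also have "\<dots> \<le> 2 * r + 1" by simp
      finally show "real (card {b\<in>{..k}. a < b + r \<and> b < a + r}) \<le> 2 * real r + 1" by linarith
      show "0 \<le> P" using P[of 0] f0[of 0] by (simp add: f_def)
    qed
    finally show ?thesis .
  qed
  have "S3 = (\<Sum>a\<le>k. f a * (\<Sum>b\<le>k. f b * (if a < b + r \<and> b < a + r then 1 else 0)))"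
    unfolding S3_def by (simp add: sum_distrib_left mult.assoc)
  also have "\<dots> \<le> (\<Sum>a\<le>k. f a * ((2 * real r + 1) * P))"
    using inner f0 by (intro sum_mono mult_left_mono) auto
  also have "\<dots> = (2 * real r + 1) * P" by (simp add: sum_distrib_right[symmetric] f_def bp_sum)
  finally have "S3 \<le> (2 * real r + 1) * P" .
  with tot have "(1 - (2 * real r + 1) * P) / 2 \<le> S1" by simp
  thus ?thesis by (simp add: S1_def f_def)
qed

lemma bp_mean: "(\<Sum>c\<le>m. real c * bp m p c) = real m * p"
proof (cases m)
  case 0 thus ?thesis by simp
next
  case (Suc m')
  have "(\<Sum>c\<le>Suc m'. real c * bp (Suc m') p c) = (\<Sum>c\<le>m'. real (Suc c) * bp (Suc m') p (Suc c))"
    by (subst sum.atMost_Suc_shift) simp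
  also have "\<dots> = (\<Sum>c\<le>m'. real (Suc m') * p * bp m' p c)"
  proof (rule sum.cong, simp)
    fix c assume "c \<in> {..m'}"
    have "real (Suc c) * real (Suc m' choose Suc c) = real (Suc m') * real (m' choose c)"
      using Suc_times_binomial[of c m'] by (metis of_nat_mult)
    have "real (Suc c) * bp (Suc m') p (Suc c) = (real (Suc c) * real (Suc m' choose Suc c)) * (p * p ^ c * (1 - p) ^ (m' - c))"
      unfolding bp_def by (simp add: algebra_simps)
    also have "\<dots> = real (Suc m') * p * bp m' p c"
      unfolding \<open>real (Suc c) * real (Suc m' choose Suc c) = real (Suc m') * real (m' choose c)\<close> bp_def
      by (simp add: algebra_simps)
    finally show "real (Suc c) * bp (Suc m') p (Suc c) = real (Suc m') * p * bp m' p c" .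
  qed
  also have "\<dots> = real (Suc m') * p" by (simp add: sum_distrib_left[symmetric] bp_sum)
  finally show ?thesis using Suc by simp
qed

lemma bp_markov:
  assumes p0: "0 \<le> p" and p1: "p \<le> 1"
  shows "1 - real m * (1 - p) / (real r + 1) \<le> (\<Sum>c\<le>m. bp m p c * (if m \<le> c + r then 1 else 0))"
proof -
  have "(\<Sum>c\<le>m. bp m p c * (if m \<le> c + r then 0 else 1)) \<le> (\<Sum>c\<le>m. bp m p c * ((real m - real c) / (real r + 1)))"
  proof (intro sum_mono)
    fix c assume c: "c \<in> {..m}"
    have "(if m \<le> c + r then 0 else 1) \<le> (real m - real c) / (real r + 1)"
      using c by (auto simp: field_simps)
    thus "bp m p c * (if m \<le> c + r then 0 else 1) \<le> bp m p c * ((real m - real c) / (real r + 1))"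
      using bp_nonneg[OF p0 p1] by (intro mult_left_mono) auto
  qed
  also have "\<dots> = (real m * (\<Sum>c\<le>m. bp m p c) - (\<Sum>c\<le>m. real c * bp m p c)) / (real r + 1)"
    by (simp add: sum_divide_distrib[symmetric] sum_distrib_left algebra_simps sum_subtractf)
  also have "\<dots> = real m * (1 - p) / (real r + 1)" by (simp add: bp_sum bp_mean algebra_simps)
  finally have A: "(\<Sum>c\<le>m. bp m p c * (if m \<le> c + r then 0 else 1)) \<le> real m * (1 - p) / (real r + 1)" .
  have "(\<Sum>c\<le>m. bp m p c * (if m \<le> c + r then 1 else 0)) + (\<Sum>c\<le>m. bp m p c * (if m \<le> c + r then 0 else 1)) = 1"
    by (simp add: sum.distrib[symmetric] bp_sum if_distrib cong: if_cong)
  with A show ?thesis by linarith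
qed

lemma bp_triple:
  assumes p0: "0 \<le> p" and p1: "p \<le> 1"
  shows "(\<Sum>c\<le>m. bp m p c * (if m \<le> c + r then 1 else 0)) *
         (\<Sum>a\<le>k. \<Sum>b\<le>k. bp k p a * bp k p b * (if a + r \<le> b then 1 else 0))
       \<le> (\<Sum>a\<le>k. \<Sum>b\<le>k. \<Sum>c\<le>m. bp k p a * bp k p b * bp m p c * (if a + m \<le> b + c then 1 else 0))"
proof -
  have "(\<Sum>c\<le>m. bp m p c * (if m \<le> c + r then 1 else 0)) *
         (\<Sum>a\<le>k. \<Sum>b\<le>k. bp k p a * bp k p b * (if a + r \<le> b then 1 else 0))
      = (\<Sum>a\<le>k. \<Sum>b\<le>k. \<Sum>c\<le>m. bp k p a * bp k p b * bp m p c * ((if a + r \<le> b then 1 else 0) * (if m \<le> c + r then 1 else 0)))"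
    by (simp add: sum_distrib_left sum_distrib_right algebra_simps)
  also have "\<dots> \<le> (\<Sum>a\<le>k. \<Sum>b\<le>k. \<Sum>c\<le>m. bp k p a * bp k p b * bp m p c * (if a + m \<le> b + c then 1 else 0))"
  proof (intro sum_mono mult_left_mono)
    fix a b c
    show "(if a + r \<le> b then 1 else 0) * (if m \<le> c + r then 1 else 0) \<le> (if a + m \<le> b + c then 1::real else 0)"
      by auto
    show "0 \<le> bp k p a * bp k p b * bp m p c" using bp_nonneg[OF p0 p1] by simp
  qed
  finally show ?thesis .
qed


lemma fiber_eq:
  assumes "E \<subseteq> I" "T \<subseteq> I" "T \<inter> E = {}" "card T \<le> j" "finite I"
  shows "{S. S \<subseteq> I \<and> card S = j \<and> S - E = T} = (\<lambda>U. T \<union> U) ` {U. U \<subseteq> E \<and> card U = j - card T}"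
proof (intro set_eqI iffI)
  fix S assume S: "S \<in> {S. S \<subseteq> I \<and> card S = j \<and> S - E = T}"
  hence "S = T \<union> (S \<inter> E)" by auto
  moreover have "card (S \<inter> E) = j - card T"
  proof -
    have "finite S" using S assms(5) finite_subset by blast
    hence fin: "finite T" "finite (S \<inter> E)" using S by auto
    have "card S = card T + card (S \<inter> E)"
      using card_Un_disjoint[OF fin] \<open>S = T \<union> (S \<inter> E)\<close> assms by auto
    thus ?thesis using S by auto
  qed
  ultimately show "S \<in> (\<lambda>U. T \<union> U) ` {U. U \<subseteq> E \<and> card U = j - card T}" by blast
next
  fix S assume "S \<in> (\<lambda>U. T \<union> U) ` {U. U \<subseteq> E \<and> card U = j - card T}"
  then obtain U where U: "U \<subseteq> E" "card U = j - card T" "S = T \<union> U" by auto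
  have fE: "finite E" using finite_subset[OF assms(1) assms(5)] .
  have fin: "finite T" "finite U" using finite_subset[OF assms(2) assms(5)] finite_subset[OF U(1) fE] by auto
  have "card S = card T + card U" using card_Un_disjoint[OF fin] U assms by auto
  thus "S \<in> {S. S \<subseteq> I \<and> card S = j \<and> S - E = T}" using U assms by auto
qed

lemma fiber_card:
  assumes "E \<subseteq> I" "T \<subseteq> I" "T \<inter> E = {}" "card T \<le> j" "finite I"
  shows "card {S. S \<subseteq> I \<and> card S = j \<and> S - E = T} = card E choose (j - card T)"
proof -
  have "inj_on (\<lambda>U. T \<union> U) {U. U \<subseteq> E \<and> card U = j - card T}"
    using assms by (auto simp: inj_on_def)
  hence "card ((\<lambda>U. T \<union> U) ` {U. U \<subseteq> E \<and> card U = j - card T}) = card {U. U \<subseteq> E \<and> card U = j - card T}"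
    by (rule card_image)
  also have "\<dots> = card E choose (j - card T)" using finite_subset[OF assms(1) assms(5)] by (intro n_subsets)
  finally show ?thesis using fiber_eq[OF assms] by simp
qed

lemma binom_cmp:
  assumes "2 * j + m \<le> e"
  shows "e choose j \<le> e choose (j + m)"
proof (cases "2 * (j + m) \<le> e")
  case True thus ?thesis by (intro binomial_mono) auto
next
  case False
  have "e choose (j + m) = e choose (e - (j + m))" using assms by (intro binomial_symmetric) auto
  moreover have "e choose j \<le> e choose (e - (j + m))" using assms False by (intro binomial_mono) auto
  ultimately show ?thesis by simp
qed

lemma main_comb:
  fixes I E :: "'a set" and G :: "'a set \<Rightarrow> real"
  assumes fin: "finite I" and EI: "E \<subseteq> I" and cI: "card I = 2 * k + m" and G0: "\<And>T. 0 \<le> G T"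
  shows "(\<Sum>S\<in>{S. S \<subseteq> I \<and> card S = k}. (if card (S \<inter> E) + m \<le> card (E - S) then G (S - E) else 0))
     \<le> (\<Sum>S\<in>{S. S \<subseteq> I \<and> card S = k + m}. G (S - E))"
proof -
  let ?A = "{S. S \<subseteq> I \<and> card S = k}" and ?B = "{S. S \<subseteq> I \<and> card S = k + m}"
  let ?P = "Pow (I - E)"
  have finA: "finite ?A" and finB: "finite ?B" using fin by auto
  have finP: "finite ?P" using fin by auto
  have imA: "(\<lambda>S. S - E) ` ?A \<subseteq> ?P" and imB: "(\<lambda>S. S - E) ` ?B \<subseteq> ?P" by auto
  define c' where "c' (T::'a set) \<longleftrightarrow> (k - card T) + m \<le> card E - (k - card T)" for T
  have L: "(\<Sum>S\<in>?A. (if card (S \<inter> E) + m \<le> card (E - S) then G (S - E) else 0))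
     = (\<Sum>T\<in>?P. \<Sum>S\<in>{S. S \<in> ?A \<and> S - E = T}. (if card (S \<inter> E) + m \<le> card (E - S) then G (S - E) else 0))"
    by (rule sum.group[OF finA finP imA, symmetric])
  have R: "(\<Sum>S\<in>?B. G (S - E)) = (\<Sum>T\<in>?P. \<Sum>S\<in>{S. S \<in> ?B \<and> S - E = T}. G (S - E))"
    by (rule sum.group[OF finB finP imB, symmetric])
  have cmp: "(\<Sum>S\<in>{S. S \<in> ?A \<and> S - E = T}. (if card (S \<inter> E) + m \<le> card (E - S) then G (S - E) else 0))
       \<le> (\<Sum>S\<in>{S. S \<in> ?B \<and> S - E = T}. G (S - E))" if T: "T \<in> ?P" for T
  proof -
    have TI: "T \<subseteq> I" "T \<inter> E = {}" using T by auto
    have finE: "finite E" using fin EI finite_subset by auto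
    have eq1: "(\<Sum>S\<in>{S. S \<in> ?A \<and> S - E = T}. (if card (S \<inter> E) + m \<le> card (E - S) then G (S - E) else 0))
        = (\<Sum>S\<in>{S. S \<in> ?A \<and> S - E = T}. (if c' T then G T else 0))"
    proof (rule sum.cong, simp)
      fix S assume S: "S \<in> {S. S \<in> ?A \<and> S - E = T}"
      have finS: "finite S" using S fin finite_subset by auto
      have "S = T \<union> (S \<inter> E)" using S by auto
      hence cS: "card S = card T + card (S \<inter> E)"
      proof -
        have f1: "finite T" "finite (S \<inter> E)" using finS S by auto
        have "T \<inter> (S \<inter> E) = {}" using TI by auto
        thus ?thesis using card_Un_disjoint[OF f1] \<open>S = T \<union> (S \<inter> E)\<close> by simp
      qed
      have "card (E - S) = card E - card (S \<inter> E)"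
        using card_Diff_subset_Int[of E S] finE by (simp add: Int_commute)
      moreover have "card (S \<inter> E) = k - card T" using cS S by auto
      ultimately show "(if card (S \<inter> E) + m \<le> card (E - S) then G (S - E) else 0) = (if c' T then G T else 0)"
        using S by (simp add: c'_def)
    qed
    also have "\<dots> = real (card {S. S \<in> ?A \<and> S - E = T}) * (if c' T then G T else 0)" by simp
    also have "\<dots> \<le> real (card {S. S \<in> ?B \<and> S - E = T}) * G T"
    proof (cases "c' T \<and> card T \<le> k")
      case True
      have "card {S. S \<in> ?A \<and> S - E = T} = card E choose (k - card T)"
        using fiber_card[OF EI TI _ fin, of k] True by simp
      also have "\<dots> \<le> card E choose (k - card T + m)"
        using True unfolding c'_def by (intro binom_cmp) linarith
      also have "\<dots> = card {S. S \<in> ?B \<and> S - E = T}"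
        using fiber_card[OF EI TI _ fin, of "k + m"] True by simp
      finally show ?thesis using True G0[of T] by (simp add: mult_right_mono)
    next
      case False
      show ?thesis
      proof (cases "c' T")
        case True
        with False have "card T > k" by simp
        have "{S. S \<in> ?A \<and> S - E = T} = {}"
        proof (rule ccontr)
          assume "{S. S \<in> ?A \<and> S - E = T} \<noteq> {}"
          then obtain S where S: "S \<subseteq> I" "card S = k" "S - E = T" by auto
          have "card T \<le> card S" using S fin finite_subset by (intro card_mono) auto
          thus False using S \<open>card T > k\<close> by simp
        qed
        hence "real (card {S. S \<in> ?A \<and> S - E = T}) * (if c' T then G T else 0) = 0" by (simp only: card.empty)
        moreover have "0 \<le> real (card {S. S \<in> ?B \<and> S - E = T}) * G T" using G0[of T] by simp
        ultimately show ?thesis by linarith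
      next
        case False thus ?thesis using G0[of T] by simp
      qed
    qed
    also have "\<dots> = (\<Sum>S\<in>{S. S \<in> ?B \<and> S - E = T}. G (S - E))" by simp
    finally show ?thesis .
  qed
  show ?thesis unfolding L R by (rule sum_mono) (rule cmp)
qed


lemma sum_Pow_Un:
  assumes "finite X" "finite Y" "X \<inter> Y = {}"
  shows "(\<Sum>E\<in>Pow (X \<union> Y). h E) = (\<Sum>E1\<in>Pow X. \<Sum>E2\<in>Pow Y. h (E1 \<union> E2))"
proof -
  have inj: "inj_on (\<lambda>(a, b). a \<union> b) (Pow X \<times> Pow Y)"
    unfolding inj_on_def
  proof (clarify)
    fix x y xa ya assume h: "x \<subseteq> X" "y \<subseteq> Y" "xa \<subseteq> X" "ya \<subseteq> Y" "x \<union> y = xa \<union> ya"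
    have "x = (x \<union> y) \<inter> X" "xa = (xa \<union> ya) \<inter> X" "y = (x \<union> y) \<inter> Y" "ya = (xa \<union> ya) \<inter> Y"
      using h assms(3) by auto
    thus "x = xa \<and> y = ya" using h(5) by metis
  qed
  have im: "(\<lambda>(a, b). a \<union> b) ` (Pow X \<times> Pow Y) = Pow (X \<union> Y)"
  proof (intro set_eqI iffI)
    fix E assume "E \<in> Pow (X \<union> Y)"
    hence "E = (E \<inter> X) \<union> (E \<inter> Y)" "(E \<inter> X, E \<inter> Y) \<in> Pow X \<times> Pow Y" by auto
    thus "E \<in> (\<lambda>(a, b). a \<union> b) ` (Pow X \<times> Pow Y)" by (metis (no_types, lifting) case_prod_conv image_eqI)
  qed auto
  have "(\<Sum>E1\<in>Pow X. \<Sum>E2\<in>Pow Y. h (E1 \<union> E2)) = (\<Sum>p\<in>Pow X \<times> Pow Y. h ((\<lambda>(a, b). a \<union> b) p))"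
    by (simp add: sum.cartesian_product split_def)
  also have "\<dots> = (\<Sum>E\<in>(\<lambda>(a, b). a \<union> b) ` (Pow X \<times> Pow Y). h E)"
    using sum.reindex[OF inj, of h] by (simp add: comp_def)
  finally show ?thesis using im by simp
qed

lemma sum_Pow_card:
  assumes "finite X"
  shows "(\<Sum>E\<in>Pow X. g (card E)) = (\<Sum>i\<le>card X. real (card X choose i) * g i)"
proof -
  have im: "card ` Pow X \<subseteq> {..card X}" using assms by (auto intro: card_mono)
  have "(\<Sum>E\<in>Pow X. g (card E)) = (\<Sum>i\<le>card X. \<Sum>E\<in>{E. E \<in> Pow X \<and> card E = i}. g (card E))"
    using assms by (intro sum.group[symmetric, OF _ _ im]) auto
  also have "\<dots> = (\<Sum>i\<le>card X. real (card X choose i) * g i)"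
  proof (rule sum.cong, simp)
    fix i
    have "(\<Sum>E\<in>{E. E \<in> Pow X \<and> card E = i}. g (card E)) = (\<Sum>E\<in>{E. E \<subseteq> X \<and> card E = i}. g i)"
      by (intro sum.cong) auto
    also have "\<dots> = real (card {E. E \<subseteq> X \<and> card E = i}) * g i" by simp
    also have "\<dots> = real (card X choose i) * g i" using n_subsets[OF assms] by simp
    finally show "(\<Sum>E\<in>{E. E \<in> Pow X \<and> card E = i}. g (card E)) = real (card X choose i) * g i" .
  qed
  finally show ?thesis .
qed

definition wt :: "real \<Rightarrow> 'a set \<Rightarrow> 'a set \<Rightarrow> real" where
  "wt s X E = (\<Prod>j\<in>X. if j \<in> E then s else 1 - s)"

lemma wt_card:
  assumes "finite X" "E \<subseteq> X"
  shows "wt s X E = s ^ card E * (1 - s) ^ (card X - card E)"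
proof -
  have "wt s X E = (\<Prod>j\<in>X \<inter> {j. j \<in> E}. s) * (\<Prod>j\<in>X \<inter> - {j. j \<in> E}. 1 - s)"
    unfolding wt_def using prod.If_cases[OF assms(1), of "\<lambda>j. j \<in> E" "\<lambda>_. s" "\<lambda>_. 1 - s"] by simp
  also have "X \<inter> {j. j \<in> E} = E" using assms by auto
  also have "X \<inter> - {j. j \<in> E} = X - E" by auto
  finally have "wt s X E = s ^ card E * (1 - s) ^ card (X - E)" by simp
  moreover have "card (X - E) = card X - card E" using assms by (simp add: card_Diff_subset finite_subset)
  ultimately show ?thesis by simp
qed

lemma erase_sum:
  fixes I S A R :: "'a set"
  assumes fin: "finite I" and part: "I = S \<union> A \<union> R" and d: "S \<inter> A = {}" "S \<inter> R = {}" "A \<inter> R = {}"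
    and cS: "card S = k" and cA: "card A = k" and cR: "card R = m"
  shows "(\<Sum>E\<in>Pow I. (if card (S \<inter> E) + m \<le> card (E - S) then wt s I E else 0))
     = (\<Sum>a\<le>k. \<Sum>b\<le>k. \<Sum>c\<le>m. bp k s a * bp k s b * bp m s c * (if a + m \<le> b + c then 1 else 0))"
proof -
  have fS: "finite S" and fA: "finite A" and fR: "finite R" using fin part by auto
  define F where "F a b c = (if a + m \<le> b + c then 1 else 0) * (s ^ a * (1 - s) ^ (k - a)) * (s ^ b * (1 - s) ^ (k - b)) * (s ^ c * (1 - s) ^ (m - c))" for a b c
  have "(\<Sum>E\<in>Pow I. (if card (S \<inter> E) + m \<le> card (E - S) then wt s I E else 0))
     = (\<Sum>E1\<in>Pow S. \<Sum>E23\<in>Pow (A \<union> R). (if card (S \<inter> (E1 \<union> E23)) + m \<le> card ((E1 \<union> E23) - S) then wt s I (E1 \<union> E23) else 0))"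
    unfolding part Un_assoc using fS fA fR d by (intro sum_Pow_Un) auto
  also have "\<dots> = (\<Sum>E1\<in>Pow S. \<Sum>E2\<in>Pow A. \<Sum>E3\<in>Pow R. (if card (S \<inter> (E1 \<union> (E2 \<union> E3))) + m \<le> card ((E1 \<union> (E2 \<union> E3)) - S) then wt s I (E1 \<union> (E2 \<union> E3)) else 0))"
    using fA fR d by (intro sum.cong refl sum_Pow_Un) auto
  also have "\<dots> = (\<Sum>E1\<in>Pow S. \<Sum>E2\<in>Pow A. \<Sum>E3\<in>Pow R. F (card E1) (card E2) (card E3))"
  proof (intro sum.cong refl)
    fix E1 E2 E3 assume E: "E1 \<in> Pow S" "E2 \<in> Pow A" "E3 \<in> Pow R"
    have f123: "finite E1" "finite E2" "finite E3" using E fS fA fR finite_subset by auto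
    have i1: "S \<inter> (E1 \<union> (E2 \<union> E3)) = E1" using E d by auto
    have i2: "(E1 \<union> (E2 \<union> E3)) - S = E2 \<union> E3" using E d by auto
    have c23: "card (E2 \<union> E3) = card E2 + card E3" using E d f123 by (intro card_Un_disjoint) auto
    have "wt s I (E1 \<union> (E2 \<union> E3)) = wt s S E1 * wt s A E2 * wt s R E3"
    proof -
      have "wt s I (E1 \<union> (E2 \<union> E3)) = (\<Prod>j\<in>S \<union> (A \<union> R). if j \<in> E1 \<union> (E2 \<union> E3) then s else 1 - s)"
        unfolding wt_def part by (simp add: Un_assoc)
      also have "\<dots> = (\<Prod>j\<in>S. if j \<in> E1 \<union> (E2 \<union> E3) then s else 1 - s) * (\<Prod>j\<in>A \<union> R. if j \<in> E1 \<union> (E2 \<union> E3) then s else 1 - s)"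
        using fS fA fR d by (intro prod.union_disjoint) auto
      also have "(\<Prod>j\<in>A \<union> R. if j \<in> E1 \<union> (E2 \<union> E3) then s else 1 - s) = (\<Prod>j\<in>A. if j \<in> E1 \<union> (E2 \<union> E3) then s else 1 - s) * (\<Prod>j\<in>R. if j \<in> E1 \<union> (E2 \<union> E3) then s else 1 - s)"
        using fA fR d by (intro prod.union_disjoint) auto
      also have "(\<Prod>j\<in>S. if j \<in> E1 \<union> (E2 \<union> E3) then s else 1 - s) = wt s S E1"
        unfolding wt_def using E d by (intro prod.cong) auto
      also have "(\<Prod>j\<in>A. if j \<in> E1 \<union> (E2 \<union> E3) then s else 1 - s) = wt s A E2"
        unfolding wt_def using E d by (intro prod.cong) auto
      also have "(\<Prod>j\<in>R. if j \<in> E1 \<union> (E2 \<union> E3) then s else 1 - s) = wt s R E3"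
        unfolding wt_def using E d by (intro prod.cong) auto
      finally show ?thesis by (simp add: mult.assoc)
    qed
    also have "\<dots> = (s ^ card E1 * (1 - s) ^ (k - card E1)) * (s ^ card E2 * (1 - s) ^ (k - card E2)) * (s ^ card E3 * (1 - s) ^ (m - card E3))"
      using E fS fA fR cS cA cR by (simp add: wt_card)
    finally show "(if card (S \<inter> (E1 \<union> (E2 \<union> E3))) + m \<le> card ((E1 \<union> (E2 \<union> E3)) - S) then wt s I (E1 \<union> (E2 \<union> E3)) else 0) = F (card E1) (card E2) (card E3)"
      unfolding i1 i2 c23 F_def by simp
  qed
  also have "\<dots> = (\<Sum>E1\<in>Pow S. \<Sum>E2\<in>Pow A. \<Sum>c\<le>m. real (m choose c) * F (card E1) (card E2) c)"
    using sum_Pow_card[OF fR] cR by simp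
  also have "\<dots> = (\<Sum>E1\<in>Pow S. \<Sum>b\<le>k. real (k choose b) * (\<Sum>c\<le>m. real (m choose c) * F (card E1) b c))"
    using sum_Pow_card[OF fA, of "\<lambda>b. \<Sum>c\<le>m. real (m choose c) * F _ b c"] cA by simp
  also have "\<dots> = (\<Sum>a\<le>k. real (k choose a) * (\<Sum>b\<le>k. real (k choose b) * (\<Sum>c\<le>m. real (m choose c) * F a b c)))"
    using sum_Pow_card[OF fS, of "\<lambda>a. \<Sum>b\<le>k. real (k choose b) * (\<Sum>c\<le>m. real (m choose c) * F a b c)"] cS by simp
  also have "\<dots> = (\<Sum>a\<le>k. \<Sum>b\<le>k. \<Sum>c\<le>m. bp k s a * bp k s b * bp m s c * (if a + m \<le> b + c then 1 else 0))"
    by (simp add: sum_distrib_left F_def bp_def algebra_simps)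
  finally show ?thesis .
qed


definition Gr :: "(real \<Rightarrow> real) \<Rightarrow> (real \<Rightarrow> real) \<Rightarrow> (real \<Rightarrow> real) \<Rightarrow> nat set \<Rightarrow> nat set \<Rightarrow> nat set \<Rightarrow> (nat \<Rightarrow> real) \<Rightarrow> real" where
  "Gr a b0 b1 I E T x = (\<Prod>j\<in>I. if j \<in> E then a (x j) else if j \<in> T then b1 (x j) else b0 (x j))"

lemma prod_expand:
  assumes "finite I"
  shows "(\<Prod>j\<in>I. a (x j) + (if j \<in> S then b1 (x j) else b0 (x j))) = (\<Sum>E\<in>Pow I. Gr a b0 b1 I E (S - E) x)"
proof -
  have "(\<Prod>j\<in>I. a (x j) + (if j \<in> S then b1 (x j) else b0 (x j)))
      = (\<Sum>E\<in>Pow I. (\<Prod>j\<in>E. a (x j)) * (\<Prod>j\<in>I - E. if j \<in> S then b1 (x j) else b0 (x j)))"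
    by (rule prod_add[OF assms])
  also have "\<dots> = (\<Sum>E\<in>Pow I. Gr a b0 b1 I E (S - E) x)"
  proof (rule sum.cong, simp)
    fix E assume E: "E \<in> Pow I"
    have "Gr a b0 b1 I E (S - E) x = (\<Prod>j\<in>I - E. if j \<in> E then a (x j) else if j \<in> S - E then b1 (x j) else b0 (x j))
        * (\<Prod>j\<in>E. if j \<in> E then a (x j) else if j \<in> S - E then b1 (x j) else b0 (x j))"
      unfolding Gr_def using E assms by (intro prod.subset_diff) auto
    also have "\<dots> = (\<Prod>j\<in>I - E. if j \<in> S then b1 (x j) else b0 (x j)) * (\<Prod>j\<in>E. a (x j))"
      by (intro arg_cong2[where f="(*)"] prod.cong) auto
    finally show "(\<Prod>j\<in>E. a (x j)) * (\<Prod>j\<in>I - E. if j \<in> S then b1 (x j) else b0 (x j)) = Gr a b0 b1 I E (S - E) x"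
      by (simp add: mult.commute)
  qed
  finally show ?thesis .
qed

lemma Gr_integral:
  assumes fin: "finite I" and EI: "E \<subseteq> I"
    and m[measurable]: "a \<in> borel_measurable borel" "b0 \<in> borel_measurable borel" "b1 \<in> borel_measurable borel"
    and nn: "\<And>y. 0 \<le> a y" "\<And>y. 0 \<le> b0 y" "\<And>y. 0 \<le> b1 y"
    and ia: "(\<integral>\<^sup>+y. ennreal (a y) \<partial>lborel) = ennreal s"
    and ib0: "(\<integral>\<^sup>+y. ennreal (b0 y) \<partial>lborel) = ennreal (1 - s)"
    and ib1: "(\<integral>\<^sup>+y. ennreal (b1 y) \<partial>lborel) = ennreal (1 - s)"
    and s: "0 \<le> s" "s \<le> 1"
  shows "(\<integral>\<^sup>+x. ennreal (Gr a b0 b1 I E T x) \<partial>PiM I (\<lambda>_. lborel)) = ennreal (wt s I E)"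
proof -
  interpret pl: product_sigma_finite "\<lambda>_::nat. lborel::real measure" by unfold_locales
  define g where "g j y = (if j \<in> E then a y else if j \<in> T then b1 y else b0 y)" for j y
  have gm: "(\<lambda>y. ennreal (g j y)) \<in> borel_measurable lborel" for j unfolding g_def by measurable
  have g0: "0 \<le> g j y" for j y using nn by (simp add: g_def)
  have "(\<integral>\<^sup>+x. ennreal (Gr a b0 b1 I E T x) \<partial>PiM I (\<lambda>_. lborel))
     = (\<integral>\<^sup>+x. (\<Prod>j\<in>I. ennreal (g j (x j))) \<partial>PiM I (\<lambda>_. lborel))"
    unfolding Gr_def g_def[symmetric] using g0 by (intro nn_integral_cong) (simp add: prod_ennreal)
  also have "\<dots> = (\<Prod>j\<in>I. \<integral>\<^sup>+y. ennreal (g j y) \<partial>lborel)"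
    using gm by (intro pl.product_nn_integral_prod fin) auto
  also have "\<dots> = (\<Prod>j\<in>I. ennreal (if j \<in> E then s else 1 - s))"
  proof (intro prod.cong refl)
    fix j assume "j \<in> I"
    show "(\<integral>\<^sup>+y. ennreal (g j y) \<partial>lborel) = ennreal (if j \<in> E then s else 1 - s)"
      by (cases "j \<in> E"; cases "j \<in> T") (simp_all add: g_def ia ib0 ib1)
  qed
  also have "\<dots> = ennreal (wt s I E)"
    unfolding wt_def using s by (subst prod_ennreal) auto
  finally show ?thesis .
qed


definition Hf :: "(real \<Rightarrow> real) \<Rightarrow> (real \<Rightarrow> real) \<Rightarrow> (real \<Rightarrow> real) \<Rightarrow> nat \<Rightarrow> nat \<Rightarrow> nat \<Rightarrow> (nat \<Rightarrow> real) \<Rightarrow> real" where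
  "Hf a b0 b1 n k m x = (\<Sum>S\<in>{S. S \<subseteq> {0..<n} \<and> card S = k}. \<Sum>E\<in>Pow {0..<n}.
      if card (S \<inter> E) + m \<le> card (E - S) then Gr a b0 b1 {0..<n} E (S - E) x else 0)"

lemma Gr_nonneg: "(\<And>y. 0 \<le> a y) \<Longrightarrow> (\<And>y. 0 \<le> b0 y) \<Longrightarrow> (\<And>y. 0 \<le> b1 y) \<Longrightarrow> 0 \<le> Gr a b0 b1 I E T x"
  unfolding Gr_def by (intro prod_nonneg) auto

lemma point0:
  assumes nn: "\<And>y. 0 \<le> a y" "\<And>y. 0 \<le> b0 y" "\<And>y. 0 \<le> b1 y"
    and d0: "\<And>y. normal_density 0 1 y = a y + b0 y" and d1: "\<And>y. normal_density \<delta> 1 y = a y + b1 y"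
  shows "Hf a b0 b1 n k m x \<le> (\<Sum>S\<in>{S. S \<subseteq> {0..<n} \<and> card S = k}. \<Prod>j\<in>{0..<n}. normal_density (0 + (if j \<in> S then \<delta> else 0)) 1 (x j))"
  unfolding Hf_def
proof (rule sum_mono)
  fix S assume "S \<in> {S. S \<subseteq> {0..<n} \<and> card S = k}"
  have "(\<Prod>j\<in>{0..<n}. normal_density (0 + (if j \<in> S then \<delta> else 0)) 1 (x j))
      = (\<Prod>j\<in>{0..<n}. a (x j) + (if j \<in> S then b1 (x j) else b0 (x j)))"
    by (intro prod.cong refl) (simp add: d0 d1)
  also have "\<dots> = (\<Sum>E\<in>Pow {0..<n}. Gr a b0 b1 {0..<n} E (S - E) x)" by (rule prod_expand) simp
  finally have eq: "(\<Prod>j\<in>{0..<n}. normal_density (0 + (if j \<in> S then \<delta> else 0)) 1 (x j)) = (\<Sum>E\<in>Pow {0..<n}. Gr a b0 b1 {0..<n} E (S - E) x)" .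
  show "(\<Sum>E\<in>Pow {0..<n}. if card (S \<inter> E) + m \<le> card (E - S) then Gr a b0 b1 {0..<n} E (S - E) x else 0)
      \<le> (\<Prod>j\<in>{0..<n}. normal_density (0 + (if j \<in> S then \<delta> else 0)) 1 (x j))"
    unfolding eq using Gr_nonneg[OF nn] by (intro sum_mono) auto
qed

lemma point1:
  assumes nn: "\<And>y. 0 \<le> a y" "\<And>y. 0 \<le> b0 y" "\<And>y. 0 \<le> b1 y"
    and d0: "\<And>y. normal_density 0 1 y = a y + b0 y" and d1: "\<And>y. normal_density \<delta> 1 y = a y + b1 y"
    and nkm: "n = 2 * k + m"
  shows "Hf a b0 b1 n k m x \<le> (\<Sum>Q\<in>{S. S \<subseteq> {0..<n} \<and> card S = k}. \<Prod>j\<in>{0..<n}. normal_density (\<delta> + (if j \<in> Q then - \<delta> else 0)) 1 (x j))"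
proof -
  let ?I = "{0..<n}"
  let ?A = "{S. S \<subseteq> ?I \<and> card S = k}" and ?B = "{S. S \<subseteq> ?I \<and> card S = k + m}"
  have eqO: "(\<Prod>j\<in>?I. normal_density (\<delta> + (if j \<in> Q then - \<delta> else 0)) 1 (x j)) = (\<Sum>E\<in>Pow ?I. Gr a b0 b1 ?I E ((?I - Q) - E) x)" for Q
  proof -
    have "(\<Prod>j\<in>?I. normal_density (\<delta> + (if j \<in> Q then - \<delta> else 0)) 1 (x j))
      = (\<Prod>j\<in>?I. a (x j) + (if j \<in> ?I - Q then b1 (x j) else b0 (x j)))"
      by (intro prod.cong refl) (auto simp: d0 d1)
    also have "\<dots> = (\<Sum>E\<in>Pow ?I. Gr a b0 b1 ?I E ((?I - Q) - E) x)" by (rule prod_expand) simp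
    finally show ?thesis .
  qed
  have bij: "bij_betw (\<lambda>Q. ?I - Q) ?A ?B"
  proof (rule bij_betw_byWitness[where f'="\<lambda>Q. ?I - Q"])
    show "\<forall>a\<in>?A. ?I - (?I - a) = a" by auto
    show "\<forall>a\<in>?B. ?I - (?I - a) = a" by auto
    show "(\<lambda>Q. ?I - Q) ` ?A \<subseteq> ?B"
    proof
      fix y assume "y \<in> (\<lambda>Q. ?I - Q) ` ?A"
      then obtain Q where Q: "Q \<subseteq> ?I" "card Q = k" "y = ?I - Q" by auto
      have "card (?I - Q) = card ?I - card Q" using Q(1) by (intro card_Diff_subset) (auto intro: finite_subset)
      thus "y \<in> ?B" using Q nkm by auto
    qed
    show "(\<lambda>Q. ?I - Q) ` ?B \<subseteq> ?A"
    proof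
      fix y assume "y \<in> (\<lambda>Q. ?I - Q) ` ?B"
      then obtain Q where Q: "Q \<subseteq> ?I" "card Q = k + m" "y = ?I - Q" by auto
      have "card (?I - Q) = card ?I - card Q" using Q(1) by (intro card_Diff_subset) (auto intro: finite_subset)
      thus "y \<in> ?A" using Q nkm by auto
    qed
  qed
  have "Hf a b0 b1 n k m x = (\<Sum>E\<in>Pow ?I. \<Sum>S\<in>?A. if card (S \<inter> E) + m \<le> card (E - S) then Gr a b0 b1 ?I E (S - E) x else 0)"
    unfolding Hf_def by (rule sum.swap)
  also have "\<dots> \<le> (\<Sum>E\<in>Pow ?I. \<Sum>S\<in>?B. Gr a b0 b1 ?I E (S - E) x)"
  proof (rule sum_mono)
    fix E assume "E \<in> Pow ?I"
    thus "(\<Sum>S\<in>?A. if card (S \<inter> E) + m \<le> card (E - S) then Gr a b0 b1 ?I E (S - E) x else 0) \<le> (\<Sum>S\<in>?B. Gr a b0 b1 ?I E (S - E) x)"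
      using main_comb[of ?I E k m "\<lambda>T. Gr a b0 b1 ?I E T x"] nkm Gr_nonneg[OF nn] by auto
  qed
  also have "\<dots> = (\<Sum>E\<in>Pow ?I. \<Sum>Q\<in>?A. Gr a b0 b1 ?I E ((?I - Q) - E) x)"
  proof (rule sum.cong, simp)
    fix E
    show "(\<Sum>S\<in>?B. Gr a b0 b1 ?I E (S - E) x) = (\<Sum>Q\<in>?A. Gr a b0 b1 ?I E ((?I - Q) - E) x)"
      using sum.reindex_bij_betw[OF bij, of "\<lambda>S. Gr a b0 b1 ?I E (S - E) x"] by simp
  qed
  also have "\<dots> = (\<Sum>Q\<in>?A. \<Sum>E\<in>Pow ?I. Gr a b0 b1 ?I E ((?I - Q) - E) x)" by (rule sum.swap)
  also have "\<dots> = (\<Sum>Q\<in>?A. \<Prod>j\<in>?I. normal_density (\<delta> + (if j \<in> Q then - \<delta> else 0)) 1 (x j))"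
    using eqO by simp
  finally show ?thesis .
qed


lemma emeasure_obs:
  assumes "B \<in> sets (PiM {0..<n} (\<lambda>_. lborel))"
  shows "emeasure (obs_model n \<theta> \<gamma>) B = (\<integral>\<^sup>+x. ennreal (\<Prod>j\<in>{0..<n}. normal_density (\<theta> + \<gamma> j) 1 (x j)) * indicator B x \<partial>PiM {0..<n} (\<lambda>_. lborel))"
proof -
  have meas: "(\<lambda>x. \<Prod>j\<in>{0..<n}. ennreal (normal_density (\<theta> + \<gamma> j) 1 (x j))) \<in> borel_measurable (PiM {0..<n} (\<lambda>_. lborel))" by measurable
  have "emeasure (obs_model n \<theta> \<gamma>) B = (\<integral>\<^sup>+x. (\<Prod>j\<in>{0..<n}. ennreal (normal_density (\<theta> + \<gamma> j) 1 (x j))) * indicator B x \<partial>PiM {0..<n} (\<lambda>_. lborel))"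
    unfolding obs_model_def obs_density[of n "\<lambda>j. \<theta> + \<gamma> j"] by (rule emeasure_density[OF meas assms])
  also have "\<dots> = (\<integral>\<^sup>+x. ennreal (\<Prod>j\<in>{0..<n}. normal_density (\<theta> + \<gamma> j) 1 (x j)) * indicator B x \<partial>PiM {0..<n} (\<lambda>_. lborel))"
    by (intro nn_integral_cong) (simp add: prod_ennreal)
  finally show ?thesis .
qed

lemma space_obs: "space (obs_model n \<theta> \<gamma>) = space (PiM {0..<n} (\<lambda>_. lborel::real measure))"
  by (simp add: obs_model_def space_PiM)

lemma prob_obs: "prob_space (obs_model n \<theta> \<gamma>)"
  unfolding obs_model_def by (rule prob_space_PiM, rule prob_space_normal_density, simp)

lemma ennreal_one_minus:
  assumes "ennreal s + X = 1" "0 \<le> s" "s \<le> 1"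
  shows "X = ennreal (1 - s)"
proof -
  have "X \<le> 1" unfolding assms(1)[symmetric] by (rule add_increasing[OF zero_le order_refl])
  hence "X \<noteq> \<top>" using ennreal_one_less_top by (metis top.not_eq_extremum order.strict_trans1)
  then obtain x where x: "X = ennreal x" "0 \<le> x" by (cases X) auto
  have "ennreal (s + x) = ennreal s + ennreal x" using assms x by (intro ennreal_plus) auto
  hence "ennreal (s + x) = 1" using assms(1) x by simp
  hence "s + x = 1" using x assms ennreal_inj[of "s + x" 1] ennreal_1 by (metis add_nonneg_nonneg zero_le_one)
  thus ?thesis using x by simp
qed

lemma mn_le: "mn \<delta> y \<le> normal_density 0 1 y" "mn \<delta> y \<le> normal_density \<delta> 1 y" "0 \<le> mn \<delta> y"
  by (auto simp: mn_def)

lemma l0_ind: "S \<subseteq> {0..<n} \<Longrightarrow> card S = k \<Longrightarrow> l0norm n (\<lambda>j. if j \<in> S then c else 0) \<le> k"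
proof -
  assume a: "S \<subseteq> {0..<n}" "card S = k"
  have "finite S" using a(1) finite_subset by blast
  hence "card {j \<in> {0..<n}. (if j \<in> S then c else 0) \<noteq> 0} \<le> card S" by (intro card_mono) auto
  thus ?thesis using a unfolding l0norm_def by simp
qed


lemma lecam:
  fixes n k m :: nat and \<delta> t s c0 :: real and f :: "(nat \<Rightarrow> real) \<Rightarrow> real"
  assumes nkm: "n = 2 * k + m" and dt: "2 * t < \<delta>" and s01: "0 \<le> s" "s \<le> 1"
    and sMn: "ennreal s \<le> (\<integral>\<^sup>+x. ennreal (mn \<delta> x) \<partial>lborel)"
    and fm: "f \<in> borel_measurable (PiM {0..<n} (\<lambda>_. borel))"
    and c0: "0 \<le> c0"
    and Ov: "\<And>S. S \<subseteq> {0..<n} \<Longrightarrow> card S = k \<Longrightarrow>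
        c0 \<le> (\<Sum>E\<in>Pow {0..<n}. if card (S \<inter> E) + m \<le> card (E - S) then wt s {0..<n} E else 0)"
  shows "\<exists>p\<in>{(\<theta>, \<gamma>). l0norm n \<gamma> \<le> k}. c0 / 2 \<le> measure (obs_model n (fst p) (snd p))
            {x \<in> space (obs_model n (fst p) (snd p)). t < \<bar>f x - fst p\<bar>}"
proof (rule ccontr)
  assume contra: "\<not> ?thesis"
  let ?I = "{0..<n}"
  let ?L = "PiM ?I (\<lambda>_. lborel::real measure)"
  let ?A = "{S. S \<subseteq> ?I \<and> card S = k}"
  define B where "B \<theta> = {x \<in> space ?L. t < \<bar>f x - \<theta>\<bar>}" for \<theta>
  have "borel_measurable ?L = borel_measurable (PiM ?I (\<lambda>_. borel))"
    by (rule measurable_cong_sets) (auto intro!: sets_PiM_cong)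
  hence fmL[measurable]: "f \<in> borel_measurable ?L" using fm by simp
  have Bm[measurable]: "B \<theta> \<in> sets ?L" for \<theta> unfolding B_def by measurable
  have ev: "{x \<in> space (obs_model n \<theta> \<gamma>). t < \<bar>f x - \<theta>\<bar>} = B \<theta>" for \<theta> \<gamma>
    unfolding B_def space_obs ..
  define Mn where "Mn = (\<integral>\<^sup>+x. ennreal (mn \<delta> x) \<partial>lborel)"
  have "Mn \<le> (\<integral>\<^sup>+x. ennreal (normal_density 0 1 x) \<partial>lborel)"
    unfolding Mn_def by (intro nn_integral_mono) (simp add: mn_le)
  hence Mn1: "Mn \<le> 1" by (simp add: nd_total)
  hence "Mn \<noteq> \<top>" using ennreal_one_less_top by (metis top.not_eq_extremum order.strict_trans1)
  then obtain Mr where Mr: "Mn = ennreal Mr" "0 \<le> Mr" by (cases Mn) auto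
  have sMr: "s \<le> Mr" using sMn Mr s01 unfolding Mn_def[symmetric] by (simp add: ennreal_le_iff)
  define lam where "lam = s / Mr"
  have lam01: "0 \<le> lam" "lam \<le> 1" using sMr Mr s01 by (auto simp: lam_def divide_le_eq_1)
  have lamMr: "lam * Mr = s" using sMr s01 Mr by (auto simp: lam_def)
  define a where "a y = lam * mn \<delta> y" for y
  define b0 where "b0 y = normal_density 0 1 y - a y" for y
  define b1 where "b1 y = normal_density \<delta> 1 y - a y" for y
  have am[measurable]: "a \<in> borel_measurable borel" unfolding a_def by measurable
  have b0m[measurable]: "b0 \<in> borel_measurable borel" unfolding b0_def by measurable
  have b1m[measurable]: "b1 \<in> borel_measurable borel" unfolding b1_def by measurable
  have a_le: "a y \<le> mn \<delta> y" for y using lam01 mn_le(3)[of \<delta> y] unfolding a_def by (simp add: mult_left_le_one_le)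
  have nn: "0 \<le> a y" "0 \<le> b0 y" "0 \<le> b1 y" for y
    using a_le[of y] mn_le[of \<delta> y] lam01 by (auto simp: a_def b0_def b1_def)
  have d0: "normal_density 0 1 y = a y + b0 y" for y by (simp add: b0_def)
  have d1: "normal_density \<delta> 1 y = a y + b1 y" for y by (simp add: b1_def)
  have ia: "(\<integral>\<^sup>+y. ennreal (a y) \<partial>lborel) = ennreal s"
  proof -
    have "(\<integral>\<^sup>+y. ennreal (a y) \<partial>lborel) = (\<integral>\<^sup>+y. ennreal lam * ennreal (mn \<delta> y) \<partial>lborel)"
      unfolding a_def using lam01 by (intro nn_integral_cong) (simp add: ennreal_mult mn_le)
    also have "\<dots> = ennreal lam * Mn" unfolding Mn_def by (rule nn_integral_cmult) measurable
    also have "\<dots> = ennreal s" using Mr lamMr lam01 by (simp add: ennreal_mult[symmetric])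
    finally show ?thesis .
  qed
  have ib: "(\<integral>\<^sup>+y. ennreal (normal_density \<mu> 1 y - a y) \<partial>lborel) = ennreal (1 - s)"
    if "\<And>y. a y \<le> normal_density \<mu> 1 y" for \<mu>
  proof (rule ennreal_one_minus[OF _ s01])
    have "ennreal s + (\<integral>\<^sup>+y. ennreal (normal_density \<mu> 1 y - a y) \<partial>lborel)
        = (\<integral>\<^sup>+y. ennreal (a y) + ennreal (normal_density \<mu> 1 y - a y) \<partial>lborel)"
      unfolding ia[symmetric] by (rule nn_integral_add[symmetric]) auto
    also have "\<dots> = (\<integral>\<^sup>+y. ennreal (normal_density \<mu> 1 y) \<partial>lborel)"
      using nn that by (intro nn_integral_cong) (simp add: ennreal_plus[symmetric])
    also have "\<dots> = 1" by (rule nd_total)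
    finally show "ennreal s + (\<integral>\<^sup>+y. ennreal (normal_density \<mu> 1 y - a y) \<partial>lborel) = 1" .
  qed
  have ib0: "(\<integral>\<^sup>+y. ennreal (b0 y) \<partial>lborel) = ennreal (1 - s)"
    unfolding b0_def using a_le mn_le by (intro ib) (meson order.trans)
  have ib1: "(\<integral>\<^sup>+y. ennreal (b1 y) \<partial>lborel) = ennreal (1 - s)"
    unfolding b1_def using a_le mn_le by (intro ib) (meson order.trans)
  have Grm[measurable]: "(\<lambda>x. Gr a b0 b1 ?I E T x) \<in> borel_measurable ?L" for E T
    unfolding Gr_def by measurable
  have intH: "(\<integral>\<^sup>+x. ennreal (Hf a b0 b1 n k m x) \<partial>?L)
      = ennreal (\<Sum>S\<in>?A. \<Sum>E\<in>Pow ?I. if card (S \<inter> E) + m \<le> card (E - S) then wt s ?I E else 0)"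
  proof -
    have g0: "0 \<le> (if c then Gr a b0 b1 ?I E T x else 0)" for c E T x using Gr_nonneg[OF nn] by auto
    have w0: "0 \<le> wt s ?I E" for E unfolding wt_def using s01 by (intro prod_nonneg) auto
    have "(\<integral>\<^sup>+x. ennreal (Hf a b0 b1 n k m x) \<partial>?L)
       = (\<integral>\<^sup>+x. (\<Sum>S\<in>?A. \<Sum>E\<in>Pow ?I. ennreal (if card (S \<inter> E) + m \<le> card (E - S) then Gr a b0 b1 ?I E (S - E) x else 0)) \<partial>?L)"
      unfolding Hf_def using g0 by (intro nn_integral_cong) (simp add: sum_nonneg)
    also have "\<dots> = (\<Sum>S\<in>?A. \<Sum>E\<in>Pow ?I. \<integral>\<^sup>+x. ennreal (if card (S \<inter> E) + m \<le> card (E - S) then Gr a b0 b1 ?I E (S - E) x else 0) \<partial>?L)"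
      by (simp add: nn_integral_sum)
    also have "\<dots> = (\<Sum>S\<in>?A. \<Sum>E\<in>Pow ?I. ennreal (if card (S \<inter> E) + m \<le> card (E - S) then wt s ?I E else 0))"
    proof (intro sum.cong refl)
      fix S E assume "E \<in> Pow ?I"
      thus "(\<integral>\<^sup>+x. ennreal (if card (S \<inter> E) + m \<le> card (E - S) then Gr a b0 b1 ?I E (S - E) x else 0) \<partial>?L)
          = ennreal (if card (S \<inter> E) + m \<le> card (E - S) then wt s ?I E else 0)"
        using Gr_integral[OF _ _ am b0m b1m nn ia ib0 ib1 s01, of ?I E "S - E"] by auto
    qed
    also have "\<dots> = ennreal (\<Sum>S\<in>?A. \<Sum>E\<in>Pow ?I. if card (S \<inter> E) + m \<le> card (E - S) then wt s ?I E else 0)"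
      using w0 by (simp add: sum_nonneg)
    finally show ?thesis .
  qed
  have Hlow: "real (card ?A) * c0 \<le> (\<Sum>S\<in>?A. \<Sum>E\<in>Pow ?I. if card (S \<inter> E) + m \<le> card (E - S) then wt s ?I E else 0)"
  proof -
    have "(\<Sum>S\<in>?A. c0) \<le> (\<Sum>S\<in>?A. \<Sum>E\<in>Pow ?I. if card (S \<inter> E) + m \<le> card (E - S) then wt s ?I E else 0)"
      using Ov by (intro sum_mono) auto
    thus ?thesis by simp
  qed
  define q0 where "q0 S x = (\<Prod>j\<in>?I. normal_density (0 + (if j \<in> S then \<delta> else 0)) 1 (x j))" for S x
  define q1 where "q1 Q x = (\<Prod>j\<in>?I. normal_density (\<delta> + (if j \<in> Q then - \<delta> else 0)) 1 (x j))" for Q x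
  have q0m[measurable]: "q0 S \<in> borel_measurable ?L" for S unfolding q0_def by measurable
  have q1m[measurable]: "q1 Q \<in> borel_measurable ?L" for Q unfolding q1_def by measurable
  have q00: "0 \<le> q0 S x" "0 \<le> q1 Q x" for S Q x unfolding q0_def q1_def by (auto intro: prod_nonneg)
  have em0: "emeasure (obs_model n 0 (\<lambda>j. if j \<in> S then \<delta> else 0)) (B 0) = (\<integral>\<^sup>+x. ennreal (q0 S x) * indicator (B 0) x \<partial>?L)" for S
    unfolding q0_def by (rule emeasure_obs) measurable
  have em1: "emeasure (obs_model n \<delta> (\<lambda>j. if j \<in> Q then - \<delta> else 0)) (B \<delta>) = (\<integral>\<^sup>+x. ennreal (q1 Q x) * indicator (B \<delta>) x \<partial>?L)" for Q
    unfolding q1_def by (rule emeasure_obs) measurable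
  have fin_em: "emeasure (obs_model n \<theta> \<gamma>) X = ennreal (measure (obs_model n \<theta> \<gamma>) X)" for \<theta> \<gamma> X
  proof -
    interpret prob_space "obs_model n \<theta> \<gamma>" by (rule prob_obs)
    show ?thesis by (rule emeasure_eq_measure)
  qed
  define T0 where "T0 = (\<Sum>S\<in>?A. measure (obs_model n 0 (\<lambda>j. if j \<in> S then \<delta> else 0)) (B 0))"
  define T1 where "T1 = (\<Sum>Q\<in>?A. measure (obs_model n \<delta> (\<lambda>j. if j \<in> Q then - \<delta> else 0)) (B \<delta>))"
  have "ennreal (T0 + T1) = (\<Sum>S\<in>?A. emeasure (obs_model n 0 (\<lambda>j. if j \<in> S then \<delta> else 0)) (B 0))
      + (\<Sum>Q\<in>?A. emeasure (obs_model n \<delta> (\<lambda>j. if j \<in> Q then - \<delta> else 0)) (B \<delta>))"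
    unfolding T0_def T1_def fin_em by (simp add: ennreal_plus sum_nonneg)
  also have "\<dots> = (\<integral>\<^sup>+x. (\<Sum>S\<in>?A. ennreal (q0 S x) * indicator (B 0) x) + (\<Sum>Q\<in>?A. ennreal (q1 Q x) * indicator (B \<delta>) x) \<partial>?L)"
  proof -
    have e0: "(\<Sum>S\<in>?A. \<integral>\<^sup>+x. ennreal (q0 S x) * indicator (B 0) x \<partial>?L) = (\<integral>\<^sup>+x. (\<Sum>S\<in>?A. ennreal (q0 S x) * indicator (B 0) x) \<partial>?L)"
      by (rule nn_integral_sum[symmetric]) measurable
    have e1: "(\<Sum>Q\<in>?A. \<integral>\<^sup>+x. ennreal (q1 Q x) * indicator (B \<delta>) x \<partial>?L) = (\<integral>\<^sup>+x. (\<Sum>Q\<in>?A. ennreal (q1 Q x) * indicator (B \<delta>) x) \<partial>?L)"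
      by (rule nn_integral_sum[symmetric]) measurable
    show ?thesis unfolding em0 em1 e0 e1 by (rule nn_integral_add[symmetric]) measurable
  qed
  also have "\<dots> \<ge> (\<integral>\<^sup>+x. ennreal (Hf a b0 b1 n k m x) \<partial>?L)"
  proof (rule nn_integral_mono)
    fix x assume x: "x \<in> space ?L"
    have P0: "Hf a b0 b1 n k m x \<le> (\<Sum>S\<in>?A. q0 S x)" unfolding q0_def by (rule point0[OF nn d0 d1])
    have P1: "Hf a b0 b1 n k m x \<le> (\<Sum>Q\<in>?A. q1 Q x)" unfolding q1_def by (rule point1[OF nn d0 d1 nkm])
    show "ennreal (Hf a b0 b1 n k m x) \<le> (\<Sum>S\<in>?A. ennreal (q0 S x) * indicator (B 0) x) + (\<Sum>Q\<in>?A. ennreal (q1 Q x) * indicator (B \<delta>) x)"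
    proof (cases "x \<in> B 0")
      case True
      have "ennreal (Hf a b0 b1 n k m x) \<le> ennreal (\<Sum>S\<in>?A. q0 S x)" using P0 by (rule ennreal_leI)
      also have "\<dots> = (\<Sum>S\<in>?A. ennreal (q0 S x) * indicator (B 0) x)" using True q00 by (simp add: sum_nonneg)
      also have "\<dots> \<le> (\<Sum>S\<in>?A. ennreal (q0 S x) * indicator (B 0) x) + (\<Sum>Q\<in>?A. ennreal (q1 Q x) * indicator (B \<delta>) x)"
        by simp
      finally show ?thesis .
    next
      case False
      hence "\<bar>f x\<bar> \<le> t" using x by (auto simp: B_def)
      hence "x \<in> B \<delta>" using x dt by (auto simp: B_def)
      have "ennreal (Hf a b0 b1 n k m x) \<le> ennreal (\<Sum>Q\<in>?A. q1 Q x)" using P1 by (rule ennreal_leI)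
      also have "\<dots> = (\<Sum>Q\<in>?A. ennreal (q1 Q x) * indicator (B \<delta>) x)" using \<open>x \<in> B \<delta>\<close> q00 by (simp add: sum_nonneg)
      also have "\<dots> \<le> (\<Sum>S\<in>?A. ennreal (q0 S x) * indicator (B 0) x) + (\<Sum>Q\<in>?A. ennreal (q1 Q x) * indicator (B \<delta>) x)"
        by simp
      finally show ?thesis .
    qed
  qed
  finally have "ennreal (real (card ?A) * c0) \<le> ennreal (T0 + T1)"
    unfolding intH using Hlow by (meson ennreal_leI order_trans)
  moreover have "0 \<le> T0 + T1" unfolding T0_def T1_def by (intro add_nonneg_nonneg sum_nonneg) auto
  ultimately have low: "real (card ?A) * c0 \<le> T0 + T1" using ennreal_le_iff by blast
  have lt0: "measure (obs_model n 0 (\<lambda>j. if j \<in> S then \<delta> else 0)) (B 0) < c0 / 2" if "S \<in> ?A" for S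
  proof -
    have mem: "(0, \<lambda>j. if j \<in> S then \<delta> else 0) \<in> {(\<theta>, \<gamma>). l0norm n \<gamma> \<le> k}" using that l0_ind by auto
    have "\<not> c0 / 2 \<le> measure (obs_model n (fst (0::real, \<lambda>j. if j \<in> S then \<delta> else 0)) (snd (0::real, \<lambda>j. if j \<in> S then \<delta> else 0)))
            {x \<in> space (obs_model n (fst (0::real, \<lambda>j. if j \<in> S then \<delta> else 0)) (snd (0::real, \<lambda>j. if j \<in> S then \<delta> else 0))). t < \<bar>f x - fst (0::real, \<lambda>j. if j \<in> S then \<delta> else 0)\<bar>}"
      using contra mem by blast
    thus ?thesis unfolding fst_conv snd_conv ev by simp
  qed
  have lt1: "measure (obs_model n \<delta> (\<lambda>j. if j \<in> Q then - \<delta> else 0)) (B \<delta>) < c0 / 2" if "Q \<in> ?A" for Q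
  proof -
    have mem: "(\<delta>, \<lambda>j. if j \<in> Q then - \<delta> else 0) \<in> {(\<theta>, \<gamma>). l0norm n \<gamma> \<le> k}" using that l0_ind by auto
    have "\<not> c0 / 2 \<le> measure (obs_model n (fst (\<delta>, \<lambda>j. if j \<in> Q then - \<delta> else 0)) (snd (\<delta>, \<lambda>j. if j \<in> Q then - \<delta> else 0)))
            {x \<in> space (obs_model n (fst (\<delta>, \<lambda>j. if j \<in> Q then - \<delta> else 0)) (snd (\<delta>, \<lambda>j. if j \<in> Q then - \<delta> else 0))). t < \<bar>f x - fst (\<delta>, \<lambda>j. if j \<in> Q then - \<delta> else 0)\<bar>}"
      using contra mem by blast
    thus ?thesis unfolding fst_conv snd_conv ev by simp
  qed
  have Ane: "?A \<noteq> {}"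
  proof -
    have "card ?I \<ge> k" using nkm by simp
    then obtain S where "S \<subseteq> ?I" "card S = k" by (meson obtain_subset_with_card_n)
    thus ?thesis by auto
  qed
  have finA: "finite ?A" by simp
  have "T0 < (\<Sum>S\<in>?A. c0 / 2)" unfolding T0_def using lt0 finA Ane by (intro sum_strict_mono) auto
  moreover have "T1 < (\<Sum>S\<in>?A. c0 / 2)" unfolding T1_def using lt1 finA Ane by (intro sum_strict_mono) auto
  ultimately have "T0 + T1 < real (card ?A) * c0" by simp
  with low show False by simp
qed


definition Tsum :: "nat \<Rightarrow> nat \<Rightarrow> real \<Rightarrow> real" where
  "Tsum k m s = (\<Sum>a\<le>k. \<Sum>b\<le>k. \<Sum>c\<le>m. bp k s a * bp k s b * bp m s c * (if a + m \<le> b + c then 1 else 0))"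

lemma Tsum_nonneg_terms: "0 \<le> s \<Longrightarrow> s \<le> 1 \<Longrightarrow> 0 \<le> bp k s a * bp k s b * bp m s c * (if a + m \<le> b + c then 1 else 0)"
  using bp_nonneg by simp

lemma T_reg3:
  assumes "0 \<le> s" "s \<le> 1"
  shows "s ^ (2 * k + m) \<le> Tsum k m s"
proof -
  have t: "0 \<le> bp k s a * bp k s b * bp m s c * (if a + m \<le> b + c then 1 else 0)" for a b c
    using Tsum_nonneg_terms[OF assms] .
  have "s ^ (2 * k + m) = bp k s k * bp k s k * bp m s m * (if k + m \<le> k + m then 1 else 0)"
    by (simp add: bp_def power_add mult_2)
  also have "\<dots> \<le> (\<Sum>c\<le>m. bp k s k * bp k s k * bp m s c * (if k + m \<le> k + c then 1 else 0))"
    using t by (intro member_le_sum) auto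
  also have "\<dots> \<le> (\<Sum>b\<le>k. \<Sum>c\<le>m. bp k s k * bp k s b * bp m s c * (if k + m \<le> b + c then 1 else 0))"
    using t by (intro member_le_sum[where i=k and f="\<lambda>b. \<Sum>c\<le>m. bp k s k * bp k s b * bp m s c * (if k + m \<le> b + c then 1 else 0)"] sum_nonneg) auto
  also have "\<dots> \<le> Tsum k m s"
    unfolding Tsum_def using t by (intro member_le_sum[where i=k and f="\<lambda>a. \<Sum>b\<le>k. \<Sum>c\<le>m. bp k s a * bp k s b * bp m s c * (if a + m \<le> b + c then 1 else 0)"] sum_nonneg) auto
  finally show ?thesis .
qed

lemma T_main:
  assumes s: "0 < s" "s < 1" and w: "1 \<le> w" and wa: "4 * (real w)^2 \<le> (real k + 1) * s * (1 - s)"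
    and rw: "(2 * real r + 1) * (2 / real w) \<le> 1/2"
  shows "(\<Sum>c\<le>m. bp m s c * (if m \<le> c + r then 1 else 0)) / 4 \<le> Tsum k m s"
proof -
  have P: "bp k s i \<le> 2 / real w" for i by (rule bp_max[OF s w wa])
  have "1/4 \<le> (1 - (2 * real r + 1) * (2 / real w)) / 2" using rw by simp
  also have "\<dots> \<le> (\<Sum>a\<le>k. \<Sum>b\<le>k. bp k s a * bp k s b * (if a + r \<le> b then 1 else 0))"
    using s by (intro bp_anti P) auto
  finally have ab: "1/4 \<le> (\<Sum>a\<le>k. \<Sum>b\<le>k. bp k s a * bp k s b * (if a + r \<le> b then 1 else 0))" .
  have pm0: "0 \<le> (\<Sum>c\<le>m. bp m s c * (if m \<le> c + r then 1 else 0))"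
    using s bp_nonneg by (intro sum_nonneg) auto
  have "(\<Sum>c\<le>m. bp m s c * (if m \<le> c + r then 1 else 0)) / 4
      \<le> (\<Sum>c\<le>m. bp m s c * (if m \<le> c + r then 1 else 0)) * (\<Sum>a\<le>k. \<Sum>b\<le>k. bp k s a * bp k s b * (if a + r \<le> b then 1 else 0))"
    using mult_left_mono[OF ab pm0] by simp
  also have "\<dots> \<le> Tsum k m s" unfolding Tsum_def using s by (intro bp_triple) auto
  finally show ?thesis .
qed

lemma Pm_full: "m \<le> r \<Longrightarrow> (\<Sum>c\<le>m. bp m s c * (if m \<le> c + r then 1 else 0)) = 1"
  by (simp add: bp_sum)

lemma Ov_T:
  assumes nkm: "n = 2 * k + m" and S: "S \<subseteq> {0..<n}" "card S = k"
  shows "(\<Sum>E\<in>Pow {0..<n}. if card (S \<inter> E) + m \<le> card (E - S) then wt s {0..<n} E else 0) = Tsum k m s"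
proof -
  have fS: "finite S" using S finite_subset by blast
  have "card ({0..<n} - S) = k + m" using S nkm by (simp add: card_Diff_subset fS)
  then obtain A where A: "A \<subseteq> {0..<n} - S" "card A = k" by (metis le_add1 obtain_subset_with_card_n)
  define R where "R = {0..<n} - S - A"
  have fA: "finite A" using A finite_subset by blast
  have cR: "card R = m"
    unfolding R_def using \<open>card ({0..<n} - S) = k + m\<close> A by (simp add: card_Diff_subset fA)
  show ?thesis unfolding Tsum_def
    by (rule erase_sum) (use A S cR in \<open>auto simp: R_def\<close>)
qed


lemma mn_ge:
  assumes d: "0 \<le> \<delta>" and s: "s \<le> 1 - \<delta>/2"
  shows "ennreal s \<le> (\<integral>\<^sup>+x. ennreal (mn \<delta> x) \<partial>lborel)"
proof -
  define M where "M = (\<integral>\<^sup>+x. ennreal (mn \<delta> x) \<partial>lborel)"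
  have "M \<le> (\<integral>\<^sup>+x. ennreal (normal_density 0 1 x) \<partial>lborel)"
    unfolding M_def by (intro nn_integral_mono) (simp add: mn_le)
  hence "M \<le> 1" by (simp add: nd_total)
  hence "M \<noteq> \<top>" using ennreal_one_less_top by (metis top.not_eq_extremum order.strict_trans1)
  then obtain Mr where Mr: "M = ennreal Mr" "0 \<le> Mr" by (cases M) auto
  have "1 \<le> M + ennreal (\<delta>/2)" unfolding M_def by (rule mn_lower2[OF d])
  also have "\<dots> = ennreal (Mr + \<delta>/2)" using Mr d by (simp add: ennreal_plus)
  finally have "ennreal 1 \<le> ennreal (Mr + \<delta>/2)" by simp
  hence "1 \<le> Mr + \<delta>/2" using Mr d by (subst (asm) ennreal_le_iff) auto
  hence "s \<le> Mr" using s by linarith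
  thus ?thesis unfolding M_def[symmetric] Mr by (rule ennreal_leI)
qed

lemma nd_lower:
  assumes L: "0 \<le> L"
  shows "exp (- L / 4) / 9 \<le> normal_density 0 1 (sqrt L / 2 + 1)"
proof -
  have sq: "(sqrt L / 2 + 1)\<^sup>2 \<le> L / 2 + 2"
  proof -
    have "(sqrt L / 2 + 1)\<^sup>2 = (sqrt L)\<^sup>2 / 4 + sqrt L + 1" by (simp add: power2_eq_square field_simps)
    also have "(sqrt L)\<^sup>2 = L" using L by simp
    also have "sqrt L \<le> L / 4 + 1"
    proof -
      have "0 \<le> (sqrt L / 2 - 1)\<^sup>2" by simp
      also have "(sqrt L / 2 - 1)\<^sup>2 = (sqrt L)\<^sup>2 / 4 - sqrt L + 1" by (simp add: power2_eq_square field_simps)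
      finally show ?thesis using L by simp
    qed
    finally show ?thesis by simp
  qed
  have e1: "exp (- L / 4 - 1) \<le> exp (- (sqrt L / 2 + 1)\<^sup>2 / 2)" using sq by simp
  have "exp (- L / 4 - 1) = exp (- L / 4) / exp 1" by (simp add: exp_diff)
  moreover have "exp (1::real) \<le> 3" using exp_le by simp
  moreover have "exp (- L / 4) / 3 \<le> exp (- L / 4) / exp 1"
    using \<open>exp (1::real) \<le> 3\<close> by (intro divide_left_mono) auto
  ultimately have e2: "exp (- L / 4) / 3 \<le> exp (- L / 4 - 1)" by simp
  have "2 * pi \<le> (3::real)^2" using pi_less_4 by simp
  hence "sqrt (2 * pi) \<le> sqrt ((3::real)^2)" by (rule real_sqrt_le_mono)
  hence s2: "sqrt (2 * pi) \<le> 3" by simp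
  have "exp (- L / 4) / 9 = (exp (- L / 4) / 3) / 3" by simp
  also have "\<dots> \<le> exp (- (sqrt L / 2 + 1)\<^sup>2 / 2) / 3"
    using order.trans[OF e2 e1] by (intro divide_right_mono) auto
  also have "\<dots> \<le> exp (- (sqrt L / 2 + 1)\<^sup>2 / 2) / sqrt (2 * pi)"
    using s2 by (intro divide_left_mono) auto
  also have "\<dots> = normal_density 0 1 (sqrt L / 2 + 1)" by (simp add: normal_density_def)
  finally show ?thesis .
qed


lemma regime3:
  fixes n k m :: nat and C :: real
  assumes nkm: "n = 2 * k + m" "1 \<le> m" and nsmall: "real n < 2 * 10^10" and C: "0 < C" "C \<le> 1 / 10^17"
  shows "\<exists>\<delta> s. 2 * (C * sqrt (ln (1 + real n / (real m)^2))) < \<delta> \<and> 0 \<le> s \<and> s \<le> 1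
           \<and> ennreal s \<le> (\<integral>\<^sup>+x. ennreal (mn \<delta> x) \<partial>lborel) \<and> 3/16 \<le> Tsum k m s"
proof -
  have n1: "real n \<ge> 1" using nkm by simp
  define y where "y = real n / (real m)^2"
  have m1: "(real m)^2 \<ge> 1" using nkm by simp
  have y0: "0 \<le> y" "y \<le> real n" using m1 n1 unfolding y_def by (auto simp: divide_le_eq)
  have L: "ln (1 + y) \<le> real n" using ln_add_one_self_le_self[OF y0(1)] y0 by linarith
  have L0: "0 \<le> ln (1 + y)" using y0 by simp
  have "real n \<le> 141422^2" using nsmall by simp
  hence "sqrt (ln (1 + y)) \<le> sqrt (141422^2)" using L by (intro real_sqrt_le_mono) linarith
  hence sL: "sqrt (ln (1 + y)) \<le> 141422" by simp
  have "2 * (C * sqrt (ln (1 + y))) \<le> 2 * (1 / 10^17 * 141422)"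
    using C sL L0 by (intro mult_left_mono mult_mono) auto
  also have "\<dots> < 1 / (2 * 10^10)" by simp
  also have "\<dots> < 1 / real n" using nsmall n1 by (intro divide_strict_left_mono) auto
  finally have t: "2 * (C * sqrt (ln (1 + y))) < 1 / real n" .
  define s where "s = 1 - 1 / (2 * real n)"
  have s01: "0 \<le> s" "s \<le> 1" using n1 by (auto simp: s_def field_simps)
  have sm: "ennreal s \<le> (\<integral>\<^sup>+x. ennreal (mn (1 / real n) x) \<partial>lborel)"
    using n1 by (intro mn_ge) (auto simp: s_def)
  have "1 + real n * (- (1 / (2 * real n))) \<le> (1 + (- (1 / (2 * real n)))) ^ n"
    using n1 by (intro Bernoulli_inequality) (auto simp: field_simps)
  hence "1/2 \<le> s ^ n" using n1 by (simp add: s_def)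
  also have "s ^ n \<le> Tsum k m s" using T_reg3[OF s01, of k m] nkm by simp
  finally have "3/16 \<le> Tsum k m s" by simp
  thus ?thesis using t s01 sm unfolding y_def by blast
qed

lemma regime1:
  fixes n k m :: nat and C :: real
  assumes nkm: "n = 2 * k + m" "1 \<le> m" and k4: "real n \<le> 4 * real k"
    and yb: "10^7 \<le> real n / (real m)^2" and C: "0 < C" "C < 1/2"
  shows "\<exists>\<delta> s. 2 * (C * sqrt (ln (1 + real n / (real m)^2))) < \<delta> \<and> 0 \<le> s \<and> s \<le> 1
           \<and> ennreal s \<le> (\<integral>\<^sup>+x. ennreal (mn \<delta> x) \<partial>lborel) \<and> 3/16 \<le> Tsum k m s"
proof -
  define y where "y = real n / (real m)^2"
  define L where "L = ln (1 + y)"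
  have m1: "(real m)^2 \<ge> 1" using nkm by simp
  have y7: "10^7 \<le> y" using yb by (simp add: y_def)
  have Lpos: "0 < L" using y7 by (simp add: L_def)
  have npos: "real n > 0" using nkm by simp
  have kpos: "real k > 0" using k4 npos by linarith
  define s where "s = 2000 * (real m)^2 / real k"
  have s_le: "s \<le> 8000 / y"
  proof -
    have "s = 2000 * (real m)^2 / real k" by (simp add: s_def)
    also have "\<dots> \<le> 2000 * (real m)^2 / (real n / 4)" using k4 npos m1 by (intro divide_left_mono) auto
    also have "\<dots> = 8000 / y" unfolding y_def using m1 npos by (simp add: field_simps)
    finally show ?thesis .
  qed
  have s0: "0 < s" using kpos nkm unfolding s_def by (intro divide_pos_pos) auto
  have "8000 / y \<le> 8000 / 10^7" using y7 by (intro divide_left_mono) auto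
  hence s_half: "s \<le> 1/2" using s_le by simp
  define z where "z = exp (L / 4)"
  have z0: "0 < z" by (simp add: z_def)
  have z4: "z ^ 4 = 1 + y"
  proof -
    have "z ^ 4 = exp (4 * (L / 4))" unfolding z_def by (subst exp_of_nat_mult[symmetric]) simp
    also have "\<dots> = 1 + y" using y7 by (simp add: L_def)
    finally show ?thesis .
  qed
  have zy: "72000 * z \<le> y"
  proof (rule ccontr)
    assume "\<not> ?thesis"
    hence "y < 72000 * z" by simp
    hence "y ^ 4 < (72000 * z) ^ 4" using y7 by (intro power_strict_mono) auto
    also have "\<dots> = 72000^4 * (1 + y)" by (simp add: power_mult_distrib z4)
    also have "\<dots> \<le> 72000^4 * (2 * y)" using y7 by simp
    also have "\<dots> \<le> 10^21 * y" using y7 by simp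
    also have "10^21 * y \<le> y^3 * y"
    proof -
      have "(10^7)^3 \<le> y^3" using y7 by (intro power_mono) auto
      thus ?thesis using y7 by (intro mult_right_mono) auto
    qed
    also have "y^3 * y = y^4" by (simp add: power_Suc2[symmetric])
    finally show False by simp
  qed
  have "s \<le> 8000 / (72000 * z)" using s_le zy z0 y7 order.trans divide_left_mono by (smt (verit) divide_left_mono mult_pos_pos)
  also have "\<dots> = (1 / z) / 9" by (simp add: field_simps)
  also have "1 / z = exp (- L / 4)" unfolding z_def by (simp add: exp_minus field_simps)
  also have "exp (- L / 4) / 9 \<le> normal_density 0 1 (sqrt L / 2 + 1)" by (rule nd_lower) (use Lpos in auto)
  finally have snd: "s \<le> normal_density 0 1 (sqrt L / 2 + 1)" .
  have sm: "ennreal s \<le> (\<integral>\<^sup>+x. ennreal (mn (sqrt L) x) \<partial>lborel)"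
    using ennreal_leI[OF snd] mn_lower1[of "sqrt L"] Lpos by (meson order.trans real_sqrt_ge_zero less_imp_le)
  define w where "w = 4 * (2 * m + 1)"
  have w1: "1 \<le> w" by (simp add: w_def)
  have wa: "4 * (real w)^2 \<le> (real k + 1) * s * (1 - s)"
  proof -
    have "4 * (real w)^2 = 64 * (2 * real m + 1)^2" by (simp add: w_def power2_eq_square algebra_simps)
    also have "\<dots> \<le> 64 * (3 * real m)^2" using nkm by (intro mult_left_mono power_mono) auto
    also have "\<dots> \<le> 1000 * (real m)^2" by (simp add: power_mult_distrib)
    also have "\<dots> = real k * s / 2" using kpos by (simp add: s_def field_simps)
    also have "\<dots> \<le> (real k + 1) * s * (1 - s)"
    proof -
      have "real k * s * (1/2) \<le> real k * s * (1 - s)" using s_half s0 kpos by (intro mult_left_mono) auto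
      hence "real k * s / 2 \<le> real k * s * (1 - s)" by simp
      also have "\<dots> \<le> (real k + 1) * s * (1 - s)" using s_half s0 by (intro mult_right_mono) auto
      finally show ?thesis .
    qed
    finally show ?thesis .
  qed
  have rw: "(2 * real m + 1) * (2 / real w) \<le> 1/2" by (simp add: w_def field_simps)
  have "(\<Sum>c\<le>m. bp m s c * (if m \<le> c + m then 1 else 0)) / 4 \<le> Tsum k m s"
    using s0 s_half w1 wa rw by (intro T_main) auto
  hence T: "3/16 \<le> Tsum k m s" using Pm_full[of m m s] by simp
  have t: "2 * (C * sqrt L) < sqrt L" using C Lpos by simp
  show ?thesis using t sm T s0 s_half unfolding L_def y_def by (intro exI[of _ "sqrt L"] exI[of _ s]) (auto simp: L_def y_def)
qed

lemma regime2:
  fixes n k m :: nat and C :: real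
  assumes nkm: "n = 2 * k + m" "1 \<le> m" and k4: "real n \<le> 4 * real k" and m4: "(real m)^2 < 4 * real n"
    and nbig: "2 * 10^10 \<le> real n" and yb: "real n / (real m)^2 < 10^7" and C: "0 < C" "C \<le> 1 / 10^17"
  shows "\<exists>\<delta> s. 2 * (C * sqrt (ln (1 + real n / (real m)^2))) < \<delta> \<and> 0 \<le> s \<and> s \<le> 1
           \<and> ennreal s \<le> (\<integral>\<^sup>+x. ennreal (mn \<delta> x) \<partial>lborel) \<and> 3/16 \<le> Tsum k m s"
proof -
  define y where "y = real n / (real m)^2"
  have m1: "(real m)^2 \<ge> 1" using nkm by simp
  have y0: "0 \<le> y" by (simp add: y_def)
  have kbig: "real k \<ge> 5 * 10^9" using k4 nbig by simp
  define v where "v = min (1/2) (real k / (32768 * (real m)^2))"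
  have "(real m)^2 < 16 * real k" using m4 k4 by linarith
  hence "real k / (real m)^2 > 1/16" using m1 nkm by (simp add: less_divide_eq)
  hence "real k / (32768 * (real m)^2) > 1/524288" by (simp add: field_simps)
  hence v_lo: "1/524288 \<le> v" by (simp add: v_def)
  have v_hi: "v \<le> 1/2" by (simp add: v_def)
  have v_k: "v \<le> real k / (32768 * (real m)^2)" by (simp add: v_def)
  define s where "s = 1 - v"
  have s01: "0 < s" "s < 1" using v_lo v_hi by (auto simp: s_def)
  have sm: "ennreal s \<le> (\<integral>\<^sup>+x. ennreal (mn v x) \<partial>lborel)"
    using v_lo by (intro mn_ge) (auto simp: s_def)
  define r where "r = nat \<lceil>4 * real m * v\<rceil>"
  have r_lo: "4 * real m * v \<le> real r" unfolding r_def by linarith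
  have r_hi: "real r \<le> 4 * real m * v + 1"
  proof -
    have x0: "0 \<le> 4 * real m * v" using v_lo by simp
    hence "real r = real_of_int \<lceil>4 * real m * v\<rceil>" unfolding r_def by simp
    thus ?thesis using ceiling_correct[of "4 * real m * v"] by linarith
  qed
  define w where "w = 4 * (2 * r + 1)"
  have w1: "1 \<le> w" by (simp add: w_def)
  have kv: "4608 \<le> real k * v"
  proof -
    have "5 * 10^9 * (1/524288) \<le> real k * v" using kbig v_lo by (intro mult_mono) auto
    thus ?thesis by simp
  qed
  have wa: "4 * (real w)^2 \<le> (real k + 1) * s * (1 - s)"
  proof -
    have "4 * (real w)^2 = 64 * (2 * real r + 1)^2" by (simp add: w_def power2_eq_square algebra_simps)
    also have "\<dots> \<le> 64 * (8 * real m * v + 3)^2" using r_hi by (intro mult_left_mono power_mono) auto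
    also have "\<dots> \<le> 8192 * (real m)^2 * v^2 + 1152"
    proof -
      have sq: "0 \<le> (8 * real m * v - 3)^2" by simp
      have "(8 * real m * v + 3)^2 = 64 * (real m)^2 * v^2 + 48 * real m * v + 9" by (simp add: power2_eq_square algebra_simps)
      moreover have "(8 * real m * v - 3)^2 = 64 * (real m)^2 * v^2 - 48 * real m * v + 9" by (simp add: power2_eq_square algebra_simps)
      ultimately have "(8 * real m * v + 3)^2 \<le> 128 * (real m)^2 * v^2 + 18" using sq by linarith
      thus ?thesis by simp
    qed
    also have "\<dots> \<le> real k * v / 4 + real k * v / 4"
    proof -
      have pm: "0 < 32768 * (real m)^2" using nkm by simp
      have "32768 * (real m)^2 * v \<le> real k" using v_k pm by (simp add: le_divide_eq mult.commute)
      hence "32768 * (real m)^2 * v * v \<le> real k * v" using v_lo by (intro mult_right_mono) auto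
      hence "8192 * (real m)^2 * v^2 \<le> real k * v / 4" by (simp add: power2_eq_square)
      thus ?thesis using kv by linarith
    qed
    also have "\<dots> = real k * v * (1/2)" by simp
    also have "\<dots> \<le> real k * v * (1 - v)" using v_hi v_lo by (intro mult_left_mono) auto
    also have "\<dots> \<le> (real k + 1) * v * (1 - v)" using v_hi v_lo by (intro mult_right_mono) auto
    also have "\<dots> = (real k + 1) * s * (1 - s)" by (simp add: s_def algebra_simps)
    finally show ?thesis .
  qed
  have rw: "(2 * real r + 1) * (2 / real w) \<le> 1/2" by (simp add: w_def field_simps)
  have Pm: "3/4 \<le> (\<Sum>c\<le>m. bp m s c * (if m \<le> c + r then 1 else 0))"
  proof -
    have "real m * (1 - s) / (real r + 1) \<le> 1/4"
    proof -
      have "4 * (real m * v) \<le> real r" using r_lo by (simp add: mult.assoc)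
      hence "real m * v \<le> (real r + 1) / 4" by (simp add: field_simps)
      thus ?thesis by (simp add: s_def field_simps)
    qed
    moreover have "1 - real m * (1 - s) / (real r + 1) \<le> (\<Sum>c\<le>m. bp m s c * (if m \<le> c + r then 1 else 0))"
      using s01 by (intro bp_markov) auto
    ultimately show ?thesis by linarith
  qed
  have "(\<Sum>c\<le>m. bp m s c * (if m \<le> c + r then 1 else 0)) / 4 \<le> Tsum k m s"
    using s01 w1 wa rw by (intro T_main) auto
  hence T: "3/16 \<le> Tsum k m s" using Pm by simp
  have L25: "ln (1 + y) \<le> 25"
  proof -
    have "(2::real) ^ 25 \<le> exp 1 ^ 25" using exp_ge_add_one_self[of 1] by (intro power_mono) auto
    also have "exp (1::real) ^ 25 = exp 25" by (subst exp_of_nat_mult[symmetric]) simp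
    finally have "1 + y \<le> exp 25" using yb by (simp add: y_def)
    thus ?thesis using y0 ln_le_cancel_iff[of "1 + y" "exp 25"] by simp
  qed
  hence "sqrt (ln (1 + y)) \<le> sqrt (5^2)" by (intro real_sqrt_le_mono) simp
  hence sL: "sqrt (ln (1 + y)) \<le> 5" by simp
  have "2 * (C * sqrt (ln (1 + y))) \<le> 2 * (1 / 10^17 * 5)" using C sL y0 by (intro mult_left_mono mult_mono) auto
  also have "\<dots> < 1/524288" by simp
  finally have t: "2 * (C * sqrt (ln (1 + y))) < v" using v_lo by linarith
  show ?thesis using t sm T s01 unfolding y_def by (intro exI[of _ v] exI[of _ s]) auto
qed


lemma k_quarter:
  fixes n k :: nat
  assumes "16 \<le> real n" "real n / 2 - sqrt (real n) < real k"
  shows "real n \<le> 4 * real k"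
proof -
  have "sqrt 16 \<le> sqrt (real n)" using assms(1) by (rule real_sqrt_le_mono)
  hence s4: "4 \<le> sqrt (real n)" by simp
  have "real n = sqrt (real n) * sqrt (real n)" by simp
  also have "\<dots> \<ge> 4 * sqrt (real n)" using s4 by (intro mult_right_mono) auto
  finally have "sqrt (real n) \<le> real n / 4" by simp
  thus ?thesis using assms(2) by linarith
qed

theorem mainTheorem7:
  shows "\<exists>C>0. \<exists>c>0. \<forall>n k::nat. n \<ge> 2 \<longrightarrow>
           real n / 2 - sqrt (real n) < real k \<longrightarrow> real k < real n / 2 \<longrightarrow>
           (\<forall>f \<in> borel_measurable (PiM {0..<n} (\<lambda>_. borel)).
              c \<le> (SUP p \<in> {(\<theta>, \<gamma>). l0norm n \<gamma> \<le> k}.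
                     measure (obs_model n (fst p) (snd p))
                       {x \<in> space (obs_model n (fst p) (snd p)).
                          \<bar>f x - fst p\<bar> > C * sqrt (ln (1 + real n / (real n - 2 * real k)^2))}))"
proof -
  have main: "3/32 \<le> (SUP p \<in> {(\<theta>, \<gamma>). l0norm n \<gamma> \<le> k}. measure (obs_model n (fst p) (snd p))
            {x \<in> space (obs_model n (fst p) (snd p)). \<bar>f x - fst p\<bar> > 1 / 10^17 * sqrt (ln (1 + real n / (real n - 2 * real k)^2))})"
    if n2: "2 \<le> n" and klo: "real n / 2 - sqrt (real n) < real k" and khi: "real k < real n / 2"
    and fm: "f \<in> borel_measurable (PiM {0..<n} (\<lambda>_. borel))" for n k :: nat and f :: "(nat \<Rightarrow> real) \<Rightarrow> real"
  proof -
  define C :: real where "C = 1 / 10^17"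
  define m where "m = n - 2 * k"
  have k2n: "2 * k < n" using khi by linarith
  have nkm: "n = 2 * k + m" using k2n by (simp add: m_def)
  have m1: "1 \<le> m" using k2n by (simp add: m_def)
  have rm: "real n - 2 * real k = real m" using nkm by simp
  have m4: "(real m)^2 < 4 * real n"
  proof -
    have "real m < 2 * sqrt (real n)" using klo rm by linarith
    hence "(real m)^2 < (2 * sqrt (real n))^2" by (intro power_strict_mono) auto
    thus ?thesis by (simp add: power_mult_distrib)
  qed
  define L where "L = ln (1 + real n / (real m)^2)"
  have ex: "\<exists>\<delta> s. 2 * (C * sqrt L) < \<delta> \<and> 0 \<le> s \<and> s \<le> 1
           \<and> ennreal s \<le> (\<integral>\<^sup>+x. ennreal (mn \<delta> x) \<partial>lborel) \<and> 3/16 \<le> Tsum k m s"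
  proof (cases "10^7 \<le> real n / (real m)^2")
    case True
    have "(real m)^2 \<ge> 1" using m1 by simp
    have mpos: "0 < (real m)^2" using m1 by simp
    have "10^7 * (real m)^2 \<le> real n" using True mpos by (simp add: le_divide_eq)
    moreover have "10^7 * 1 \<le> 10^7 * (real m)^2" using \<open>(real m)^2 \<ge> 1\<close> by (intro mult_left_mono) auto
    ultimately have "10^7 \<le> real n" by linarith
    hence k4: "real n \<le> 4 * real k" using klo by (intro k_quarter) auto
    show ?thesis unfolding L_def using regime1[OF nkm m1 k4 True, of C] by (simp add: C_def)
  next
    case False
    show ?thesis
    proof (cases "2 * 10^10 \<le> real n")
      case True
      hence k4: "real n \<le> 4 * real k" using klo by (intro k_quarter) auto
      show ?thesis unfolding L_def using regime2[OF nkm m1 k4 m4 True, of C] False by (simp add: C_def)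
    next
      case False
      show ?thesis unfolding L_def using regime3[OF nkm m1, of C] False by (simp add: C_def)
    qed
  qed
  then obtain \<delta> s where ds: "2 * (C * sqrt L) < \<delta>" "0 \<le> s" "s \<le> 1"
      "ennreal s \<le> (\<integral>\<^sup>+x. ennreal (mn \<delta> x) \<partial>lborel)" "3/16 \<le> Tsum k m s" by blast
  have Ov: "3/16 \<le> (\<Sum>E\<in>Pow {0..<n}. if card (S \<inter> E) + m \<le> card (E - S) then wt s {0..<n} E else 0)"
    if "S \<subseteq> {0..<n}" "card S = k" for S
    unfolding Ov_T[OF nkm that] by (rule ds(5))
  obtain p where p: "p \<in> {(\<theta>, \<gamma>). l0norm n \<gamma> \<le> k}"
    and pm: "3/16 / 2 \<le> measure (obs_model n (fst p) (snd p))
            {x \<in> space (obs_model n (fst p) (snd p)). C * sqrt L < \<bar>f x - fst p\<bar>}"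
  proof -
    have c0: "0 \<le> (3/16::real)" by simp
    show ?thesis using lecam[OF nkm ds(1) ds(2) ds(3) ds(4) fm c0 Ov] that by blast
  qed
  have bdd: "bdd_above ((\<lambda>p. measure (obs_model n (fst p) (snd p))
            {x \<in> space (obs_model n (fst p) (snd p)). \<bar>f x - fst p\<bar> > C * sqrt L}) ` {(\<theta>, \<gamma>). l0norm n \<gamma> \<le> k})"
  proof (rule bdd_aboveI2)
    fix p
    interpret prob_space "obs_model n (fst p) (snd p)" by (rule prob_obs)
    show "measure (obs_model n (fst p) (snd p)) {x \<in> space (obs_model n (fst p) (snd p)). \<bar>f x - fst p\<bar> > C * sqrt L} \<le> 1"
      by (rule prob_le_1)
  qed
  have "3/32 \<le> (SUP p \<in> {(\<theta>, \<gamma>). l0norm n \<gamma> \<le> k}. measure (obs_model n (fst p) (snd p))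
            {x \<in> space (obs_model n (fst p) (snd p)). \<bar>f x - fst p\<bar> > C * sqrt L})"
    using pm by (intro cSUP_upper2[OF bdd p]) simp
  thus ?thesis unfolding rm L_def[symmetric] C_def[symmetric] .
  qed
  show ?thesis
    apply (rule exI[of _ "1/10^17"])
    apply (rule conjI, simp)
    apply (rule exI[of _ "3/32"])
    apply (rule conjI, simp)
    using main by blast
qed


end
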